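(* Let $d\in\{1,2,3,7,11\}$, $\Sigma_2=\{a,b\}$ and $\Sigma_1=\{c\}$. Then: (1) there is no embedding from $\mathrm{sg}(\Sigma_2)\times\mathrm{fg}(\Sigma_1)$ into $\mathcal{O}_d^{2\times2}$; (2) there is no embedding from $\mathrm{fg}(\Sigma_2)\times\mathrm{fg}(\Sigma_1)$ into $\mathcal{O}_d^{2\times2}$; (3) there is no embedding from $\mathrm{fg}(\Sigma_2)\times\mathrm{sg}(\Sigma_1)$ into $\mathrm{SL}(2,\mathcal{O}_d)$; (4) there is no embedding from $\mathrm{sg}(\Sigma_2)\times\mathrm{sg}(\Sigma_2)$ into $\mathrm{SL}(3,\mathcal{O}_d)$; (5) there is no embedding from $\mathrm{fg}(\Sigma_2)\times\mathrm{sg}(\Sigma_2)$ into $\mathcal{O}_d^{3\times3}$.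
   Context: $\mathcal{O}_d$ is the ring of algebraic integers of the imaginary quadratic field $\mathbb{Q}(\sqrt{-d})$. For an alphabet $\Sigma$, $\mathrm{sg}(\Sigma)$ is the free monoid of finite words over $\Sigma$ (including the empty word $\varepsilon$) under concatenation, and $\mathrm{fg}(\Sigma)$ is the free group on $\Sigma$. Products carry componentwise multiplication. $\mathcal{O}_d^{n\times n}$ is the multiplicative semigroup of $n\times n$ matrices with entries in $\mathcal{O}_d$, and $\mathrm{SL}(n,\mathcal{O}_d)$ the group of such matrices with determinant $1$. An embedding is an injective map $\varphi$ with $\varphi(uv)=\varphi(u)\varphi(v)$ for all $u,v$. *)

theory Defs
  imports "HOL-Analysis.Analysis" "HOL-Computational_Algebra.Polynomial"
begin

section \<open>Rings of integers of imaginary quadratic fields\<close>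

definition algebraic_integer :: "complex \<Rightarrow> bool" where
  "algebraic_integer z \<longleftrightarrow>
     (\<exists>p :: int poly. lead_coeff p = 1 \<and> poly (map_poly of_int p) z = 0)"

text \<open>The field Q(sqrt(-d)) as a subfield of the complex numbers.\<close>
definition quad_field :: "nat \<Rightarrow> complex set" where
  "quad_field d = {of_rat a + of_rat b * (\<i> * of_real (sqrt (real d))) | a b. True}"

text \<open>O_d: the algebraic integers of Q(sqrt(-d)).\<close>
definition O_d :: "nat \<Rightarrow> complex set" where
  "O_d d = {z \<in> quad_field d. algebraic_integer z}"

definition int_mats :: "nat \<Rightarrow> (complex^'n^'n) set" where
  "int_mats d = {A. \<forall>i j. A $ i $ j \<in> O_d d}"

definition SL_mats :: "nat \<Rightarrow> (complex^'n^'n) set" where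
  "SL_mats d = {A \<in> int_mats d. det A = 1}"

section \<open>Alphabets, free monoids, free groups\<close>

datatype sig2 = a | b
datatype sig1 = c

text \<open>Free monoid sg(Sigma): all finite words (lists) under concatenation.\<close>
definition sg_carrier :: "'s list set" where "sg_carrier = UNIV"
definition sg_mult :: "'s list \<Rightarrow> 's list \<Rightarrow> 's list" where "sg_mult u v = u @ v"

text \<open>Free group fg(Sigma): reduced words over letters (True,x) = x and (False,x) = x^-1,
  multiplication is concatenation followed by free reduction.\<close>
fun fg_reduced :: "(bool \<times> 's) list \<Rightarrow> bool" where
  "fg_reduced [] = True"
| "fg_reduced [l] = True"
| "fg_reduced (l # m # w) = (\<not> (snd l = snd m \<and> fst l \<noteq> fst m) \<and> fg_reduced (m # w))"

fun fg_push :: "bool \<times> 's \<Rightarrow> (bool \<times> 's) list \<Rightarrow> (bool \<times> 's) list" where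
  "fg_push l [] = [l]"
| "fg_push l (m # w) = (if snd l = snd m \<and> fst l \<noteq> fst m then w else l # m # w)"

definition fg_reduce :: "(bool \<times> 's) list \<Rightarrow> (bool \<times> 's) list" where
  "fg_reduce w = foldr fg_push w []"

definition fg_carrier :: "(bool \<times> 's) list set" where
  "fg_carrier = {w. fg_reduced w}"

definition fg_mult :: "(bool \<times> 's) list \<Rightarrow> (bool \<times> 's) list \<Rightarrow> (bool \<times> 's) list" where
  "fg_mult u v = fg_reduce (u @ v)"

section \<open>Direct products and embeddings\<close>

definition prod_mult :: "('x \<Rightarrow> 'x \<Rightarrow> 'x) \<Rightarrow> ('y \<Rightarrow> 'y \<Rightarrow> 'y) \<Rightarrow> 'x \<times> 'y \<Rightarrow> 'x \<times> 'y \<Rightarrow> 'x \<times> 'y" where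
  "prod_mult m1 m2 u v = (m1 (fst u) (fst v), m2 (snd u) (snd v))"

text \<open>An embedding of (M, mul) into the semigroup (T, tmul): an injective map M -> T
  with phi(uv) = phi(u) phi(v).\<close>
definition is_embedding ::
  "'m set \<Rightarrow> ('m \<Rightarrow> 'm \<Rightarrow> 'm) \<Rightarrow> 't set \<Rightarrow> ('t \<Rightarrow> 't \<Rightarrow> 't) \<Rightarrow> ('m \<Rightarrow> 't) \<Rightarrow> bool" where
  "is_embedding M mul T tmul \<phi> \<longleftrightarrow>
     inj_on \<phi> M \<and> \<phi> ` M \<subseteq> T \<and> (\<forall>u\<in>M. \<forall>v\<in>M. \<phi> (mul u v) = tmul (\<phi> u) (\<phi> v))"

end

theory Submission
  imports Defs "HOL-Computational_Algebra.Fundamental_Theorem_Algebra"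
begin

(* ---- from M3.thy ---- *)


lemma mm3: "((A::complex^3^3) ** B)$i$j = A$i$1*B$1$j + A$i$2*B$2$j + A$i$3*B$3$j"
  by (simp add: matrix_matrix_mult_def sum_3)
lemma mv3: "((A::complex^3^3) *v v)$i = A$i$1 * v$1 + A$i$2 * v$2 + A$i$3 * v$3"
  by (simp add: matrix_vector_mult_def sum_3)

definition Mcols :: "complex^3 \<Rightarrow> complex^3 \<Rightarrow> complex^3 \<Rightarrow> complex^3^3" where
  "Mcols x y z = (\<chi> i j. if j = 1 then x$i else if j = 2 then y$i else z$i)"

definition Mv :: "complex^3^3 \<Rightarrow> complex^3 \<Rightarrow> complex^3^3" where
  "Mv X v = Mcols v (X *v v) (X *v (X *v v))"

definition smat :: "complex \<Rightarrow> complex^3^3 \<Rightarrow> complex^3^3" where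
  "smat s M = (\<chi> i j. s * M$i$j)"

lemma mat_nth: "(mat k :: complex^3^3)$i$j = (if i = j then k else 0)"
  by (simp add: mat_def)

lemma smat_nth: "smat s M $i$j = s * M$i$j" by (simp add: smat_def)

lemma mult_Mcols: "Q ** Mcols x y z = Mcols (Q *v x) (Q *v y) (Q *v z)"
  by (auto simp: vec_eq_iff matrix_matrix_mult_def matrix_vector_mult_def Mcols_def forall_3)

lemma Mcols_mult_vec: "Mcols x y z *v cc = (\<chi> i. cc$1 * x$i + cc$2 * y$i + cc$3 * z$i)"
  by (simp add: vec_eq_iff mv3 Mcols_def algebra_simps)

lemma smat_mult_left: "A ** smat s M = smat s (A ** M)"
  by (simp add: vec_eq_iff matrix_matrix_mult_def smat_def sum_distrib_left mult_ac)
lemma smat_mult_right: "smat s M ** A = smat s (M ** A)"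
  by (simp add: vec_eq_iff matrix_matrix_mult_def smat_def sum_distrib_left mult_ac)
lemma mat_comm: "mat k ** (A::complex^3^3) = A ** mat k"
  by (simp add: vec_eq_iff mm3 mat_nth forall_3)

lemma Mv_entries: "Mv X v $ i $ 1 = v$i" "Mv X v $ i $ 2 = (X *v v)$i" "Mv X v $ i $ 3 = (X *v (X *v v))$i"
  by (auto simp: Mv_def Mcols_def)

lemma detfc:
  assumes "T$1$1 = 0" "T$2$1 = 0" "T$3$1 = 0"
  shows "det (Mv T v) =
    v$1 * (T$2$2*T$3$3 - T$2$3*T$3$2) * (T$3$2*(v$2)^2 + (T$3$3 - T$2$2) * v$2 * v$3 - T$2$3*(v$3)^2)
    + (T$1$2*(T$2$2 * v$2+T$2$3 * v$3) + T$1$3*(T$3$2 * v$2+T$3$3 * v$3)) * (T$3$2*(v$2)^2 + (T$3$3 - T$2$2) * v$2 * v$3 - T$2$3*(v$3)^2)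
    - (T$1$2 * v$2 + T$1$3 * v$3) * (v$2 * (T$3$2*(T$2$2 * v$2+T$2$3 * v$3) + T$3$3*(T$3$2 * v$2+T$3$3 * v$3)) - v$3 * (T$2$2*(T$2$2 * v$2+T$2$3 * v$3) + T$2$3*(T$3$2 * v$2+T$3$3 * v$3)))"
  using assms by (simp add: det_3 Mv_entries mv3 algebra_simps power2_eq_square)

lemma vec3_nth: "(vector [x,y,z] :: complex^3)$1 = x" "(vector [x,y,z] :: complex^3)$2 = y" "(vector [x,y,z] :: complex^3)$3 = z"
  by (simp_all add: vector_def)

lemma fcz:
  assumes "T$1$1 = 0" "T$2$1 = 0" "T$3$1 = 0" and H0: "\<forall>v. det (Mv T v) = 0"
  shows "\<exists>s. T ** T = (\<chi> i j. s * T$i$j)"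
proof -
  define a where "a = T$1$2"
  define b where "b = T$1$3"
  define c where "c = T$2$2"
  define e where "e = T$2$3"
  define f where "f = T$3$2"
  define g where "g = T$3$3"
  define q where "q = (\<lambda>w1 w2::complex. f*w1^2 + (g - c)*w1*w2 - e*w2^2)"
  have H: "v1 * (c*g - e*f) * q w1 w2 + (a*(c*w1+e*w2) + b*(f*w1+g*w2)) * q w1 w2
     - (a*w1 + b*w2) * (w1 * (f*(c*w1+e*w2) + g*(f*w1+g*w2)) - w2 * (c*(c*w1+e*w2) + e*(f*w1+g*w2))) = 0"
    for v1 w1 w2
    using H0[rule_format, of "vector [v1,w1,w2]"] detfc[OF assms(1-3), of "vector [v1,w1,w2]"]
    by (simp add: vec3_nth a_def b_def c_def e_def f_def g_def q_def)
  have H1: "(c*g - e*f) * q w1 w2 = 0" for w1 w2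
    using H[of 1 w1 w2] H[of 0 w1 w2] by (simp add: algebra_simps)
  have H2: "((a*(c*w1+e*w2) + b*(f*w1+g*w2)) - (c+g)*(a*w1 + b*w2)) * q w1 w2 = 0" if "c*g - e*f = 0" for w1 w2
  proof -
    have "(w1 * (f*(c*w1+e*w2) + g*(f*w1+g*w2)) - w2 * (c*(c*w1+e*w2) + e*(f*w1+g*w2))) = (c+g) * q w1 w2"
      using that unfolding q_def by (simp add: algebra_simps power2_eq_square)
    then show ?thesis using H[of 0 w1 w2] by (simp add: algebra_simps)
  qed
  have entries: "T ** T = (\<chi> i j. s * T$i$j)" if
      "a*c + b*f = s*a" "a*e + b*g = s*b" "c*c + e*f = s*c" "c*e+e*g = s*e" "f*c+g*f = s*f" "f*e + g*g = s*g" for s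
    using that assms(1-3) by (simp add: vec_eq_iff forall_3 mm3 a_def b_def c_def e_def f_def g_def)
  show ?thesis
  proof (cases "e = 0 \<and> f = 0 \<and> c = g")
    case True
    then show ?thesis by (intro exI[of _ c] entries) (auto simp: algebra_simps)
  next
    case False
    have "\<exists>w1 w2. q w1 w2 \<noteq> 0"
    proof (cases "e = 0 \<and> f = 0")
      case True
      then have "q 1 1 \<noteq> 0" using False by (simp add: q_def)
      then show ?thesis by blast
    next
      case F2: False
      show ?thesis
      proof (cases "e = 0")
        case True then have "q 1 0 \<noteq> 0" using F2 by (simp add: q_def)
        then show ?thesis by blast
      next
        case False then have "q 0 1 \<noteq> 0" by (simp add: q_def)
        then show ?thesis by blast
      qed
    qed
    then obtain w1 w2 where "q w1 w2 \<noteq> 0" by blast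
    then have dN: "c*g - e*f = 0" using H1[of w1 w2] by simp
    define l1 where "l1 = g*a - b*f"
    define l2 where "l2 = c*b - a*e"
    have L: "(l1*w1 + l2*w2) * q w1 w2 = 0" for w1 w2
      using H2[OF dN, of w1 w2] unfolding l1_def l2_def by (simp add: algebra_simps)
    have l0: "l1 = 0 \<and> l2 = 0"
    proof (cases "e = 0")
      case False
      have "l2 = 0" using L[of 0 1] False by (simp add: q_def)
      moreover have "l1 = 0"
      proof (rule ccontr)
        assume "l1 \<noteq> 0"
        then have "q 1 0 = 0" "q 1 1 = 0" "q 1 2 = 0" using L[of 1 0] L[of 1 1] L[of 1 2] \<open>l2 = 0\<close> by auto
        then have "e = 0" unfolding q_def by (simp add: algebra_simps)
        with False show False by simp
      qed
      ultimately show ?thesis by simp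
    next
      case e0: True
      show ?thesis
      proof (cases "f = 0")
        case False
        have "l1 = 0" using L[of 1 0] False by (simp add: q_def)
        moreover have "l2 = 0"
        proof (rule ccontr)
          assume "l2 \<noteq> 0"
          then have "q 1 1 = 0" "q 2 1 = 0" using L[of 1 1] L[of 2 1] \<open>l1 = 0\<close> by auto
          then have "f + g = c" "g * 2 + f * 4 = c * 2" unfolding q_def using e0 by (simp_all add: algebra_simps power2_eq_square)
          then have "f = 0" by (metis add.commute add_cancel_right_right add_diff_cancel_left' distrib_right mult.commute mult_2 mult_cancel_left2 numeral_Bit0 zero_neq_numeral)
          with False show False by simp
        qed
        ultimately show ?thesis by simp
      next
        case True
        with e0 False have gc: "g - c \<noteq> 0" by auto
        have "q 1 1 \<noteq> 0" "q 1 2 \<noteq> 0" using gc e0 True by (simp_all add: q_def)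
        then have "l1 * 1 + l2 * 1 = 0" "l1 * 1 + l2 * 2 = 0" using L[of 1 1] L[of 1 2] by simp_all
        then have "l1 + l2 = 0" "l1 + 2*l2 = 0" by (simp_all add: mult.commute)
        then show ?thesis by (metis add_cancel_right_right add_diff_cancel_left' mult_2)
      qed
    qed
    show ?thesis
      by (intro exI[of _ "c+g"] entries) (use l0 dN in \<open>auto simp: l1_def l2_def algebra_simps\<close>)
  qed
qed

lemma fcz': assumes "T$1$1 = 0" "T$2$1 = 0" "T$3$1 = 0" and H0: "\<forall>v. det (Mv T v) = 0"
  shows "\<exists>s. T ** T = smat s T"
  using fcz[OF assms] by (simp add: smat_def)

lemma basis_ext: assumes "(k::complex^3) \<noteq> 0" shows "\<exists>u w. det (Mcols k u w) \<noteq> 0"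
proof -
  have "k$1 \<noteq> 0 \<or> k$2 \<noteq> 0 \<or> k$3 \<noteq> 0" using assms by (auto simp: vec_eq_iff forall_3)
  then show ?thesis
  proof (elim disjE)
    assume "k$1 \<noteq> 0" then have "det (Mcols k (vector [0,1,0]) (vector [0,0,1])) \<noteq> 0"
      by (simp add: det_3 Mcols_def vec3_nth)
    then show ?thesis by blast
  next
    assume "k$2 \<noteq> 0" then have "det (Mcols k (vector [1,0,0]) (vector [0,0,1])) \<noteq> 0"
      by (simp add: det_3 Mcols_def vec3_nth)
    then show ?thesis by blast
  next
    assume "k$3 \<noteq> 0" then have "det (Mcols k (vector [1,0,0]) (vector [0,1,0])) \<noteq> 0"
      by (simp add: det_3 Mcols_def vec3_nth)
    then show ?thesis by blast
  qed
qed

lemma kernel_fcz: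
  assumes "T *v k = 0" "k \<noteq> 0" and H: "\<forall>v. det (Mv T v) = 0"
  shows "\<exists>s. T ** T = smat s T"
proof -
  obtain u w where du: "det (Mcols k u w) \<noteq> 0" using basis_ext[OF assms(2)] by blast
  define P where "P = Mcols k u w"
  have "invertible P" using du invertible_det_nz unfolding P_def by blast
  then obtain Q where PQ: "P ** Q = mat 1" and QP: "Q ** P = mat 1" unfolding invertible_def by blast
  define T' where "T' = Q ** T ** P"
  have Pe1: "P *v vector [1,0,0] = k" by (simp add: P_def Mcols_mult_vec vec3_nth vec_eq_iff)
  have "T' *v vector [1,0,0] = 0"
    unfolding T'_def by (simp add: matrix_vector_mul_assoc[symmetric] Pe1 assms(1))
  then have c0: "T'$1$1 = 0" "T'$2$1 = 0" "T'$3$1 = 0"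
    by (simp_all add: vec_eq_iff forall_3 mv3 vec3_nth)
  have "det (Mv T' v) = 0" for v
  proof -
    have PQv: "P *v (Q *v y) = y" for y by (simp add: matrix_vector_mul_assoc PQ)
    have QPv: "Q *v (P *v y) = y" for y by (simp add: matrix_vector_mul_assoc QP)
    have "Mv T' v = Q ** Mv T (P *v v)"
      unfolding Mv_def mult_Mcols T'_def
      by (simp add: matrix_vector_mul_assoc[symmetric] PQv QPv)
    then show ?thesis using H by (simp add: det_mul)
  qed
  then obtain s where s: "T' ** T' = smat s T'" using fcz'[OF c0] by blast
  have TT: "T = P ** T' ** Q" unfolding T'_def
    by (simp add: matrix_mul_assoc PQ) (simp add: matrix_mul_assoc[symmetric] PQ)
  have "T ** T = P ** (T' ** (Q ** P) ** T') ** Q"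
    unfolding TT by (simp add: matrix_mul_assoc)
  also have "\<dots> = smat s T" using s TT by (simp add: QP smat_mult_left smat_mult_right)
  finally show ?thesis by blast
qed

definition pX :: "complex^3^3 \<Rightarrow> complex^3 \<Rightarrow> complex^3^3" where
  "pX X cc = smat (cc$1) (mat 1) + smat (cc$2) X + smat (cc$3) (X ** X)"

lemma pX_vec: "pX X cc *v y = (\<chi> i. cc$1 * y$i + cc$2 * (X *v y)$i + cc$3 * (X *v (X *v y))$i)"
  by (simp add: vec_eq_iff forall_3 mv3 mm3 smat_nth mat_nth pX_def algebra_simps)


lemma mv_lin: "(A::complex^3^3) *v (\<chi> i. x * u$i + y * w$i + z * r$i) = (\<chi> i. x * (A *v u)$i + y * (A *v w)$i + z * (A *v r)$i)"
  by (simp add: vec_eq_iff forall_3 mv3 algebra_simps)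

lemma comm_vec: "X ** W = W ** X \<Longrightarrow> W *v (X *v y) = X *v (W *v y)"
  by (simp add: matrix_vector_mul_assoc)

lemma pX_comm_gen:
  assumes "X ** W = W ** X" shows "W ** pX X cc = pX X cc ** W"
proof -
  have "(W ** pX X cc) *v y = (pX X cc ** W) *v y" for y
    by (simp add: matrix_vector_mul_assoc[symmetric] pX_vec mv_lin comm_vec[OF assms])
  then show ?thesis by (simp add: matrix_eq)
qed

lemma pX_comm: "X ** pX X cc = pX X cc ** X"
  using pX_comm_gen[of X X cc] by simp

lemma cyc:
  assumes dM: "det (Mv X v) \<noteq> 0" and XY: "X ** Y = Y ** X" and XZ: "X ** Z = Z ** X"
  shows "Y ** Z = Z ** Y"
proof -
  define M where "M = Mv X v"
  have "invertible M" using dM invertible_det_nz unfolding M_def by blast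
  then obtain Mi where MMi: "M ** Mi = mat 1" and MiM: "Mi ** M = mat 1" unfolding invertible_def by blast
  have rep: "W = pX X (Mi *v (W *v v))" if XW: "X ** W = W ** X" for W
  proof -
    define cc where "cc = Mi *v (W *v v)"
    have MMiv: "M *v (Mi *v w) = w" for w by (simp add: matrix_vector_mul_assoc MMi)
    have "W *v v = M *v cc" unfolding cc_def by (simp add: MMiv)
    also have "\<dots> = pX X cc *v v" by (simp add: M_def Mv_def Mcols_mult_vec pX_vec)
    finally have Wv: "W *v v = pX X cc *v v" .
    have "W ** M = pX X cc ** M"
      unfolding M_def Mv_def mult_Mcols
      by (simp add: comm_vec[OF XW] comm_vec[OF pX_comm] Wv)
    then have "W ** M ** Mi = pX X cc ** M ** Mi" by simp
    then show ?thesis by (simp add: matrix_mul_assoc[symmetric] MMi cc_def)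
  qed
  have "Z = pX X (Mi *v (Z *v v))" by (rule rep[OF XZ])
  then have "Y ** Z = Y ** pX X (Mi *v (Z *v v))" by simp
  also have "\<dots> = pX X (Mi *v (Z *v v)) ** Y" by (rule pX_comm_gen[OF XY])
  finally show ?thesis using \<open>Z = _\<close> by simp
qed

lemma eigen_exists: "\<exists>z. det ((X::complex^3^3) - mat z) = 0"
proof -
  define p where "p = [: det X, -(X$1$1*X$2$2 + X$1$1*X$3$3 + X$2$2*X$3$3) + X$2$3*X$3$2 + X$1$2*X$2$1 + X$1$3*X$3$1,
      X$1$1+X$2$2+X$3$3, -1 :]"
  have pz: "poly p z = det (X - mat z)" for z
    by (simp add: p_def det_3 mat_nth algebra_simps)
  have "degree p = 3" by (simp add: p_def)
  then have "\<not> constant (poly p)" by (simp add: constant_degree)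
  then obtain z where "poly p z = 0" using fundamental_theorem_of_algebra by blast
  then show ?thesis using pz by metis
qed

lemma sub_mat_l: "((X::complex^3^3) - mat z) ** C = X ** C - smat z C"
  by (simp add: vec_eq_iff forall_3 mm3 mat_nth smat_nth algebra_simps)
lemma sub_mat_r: "C ** ((X::complex^3^3) - mat z) = C ** X - smat z C"
  by (simp add: vec_eq_iff forall_3 mm3 mat_nth smat_nth algebra_simps)
lemma mat_comm_sub: "X ** C = C ** X \<Longrightarrow> ((X::complex^3^3) - mat z) ** C = C ** (X - mat z)"
  by (simp add: sub_mat_l sub_mat_r)

lemma derog3:
  assumes XC: "X ** C = C ** X" and XD: "X ** D = D ** X" and CD: "C ** D \<noteq> D ** C"
  shows "\<exists>s t. X ** X = smat s X + smat t (mat 1)"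
proof -
  obtain z where dz: "det (X - mat z) = 0" using eigen_exists by blast
  define T where "T = X - mat z"
  have TC: "T ** C = C ** T" and TD: "T ** D = D ** T" unfolding T_def using XC XD mat_comm_sub by blast+
  have H: "\<forall>v. det (Mv T v) = 0" using cyc[OF _ TC TD] CD by blast
  have "\<not> invertible T" using dz invertible_det_nz unfolding T_def by blast
  then have "\<not> (\<exists>B. B ** T = mat 1)" using invertible_left_inverse by blast
  then obtain k where k: "T *v k = 0" "k \<noteq> 0" using matrix_left_invertible_ker by blast
  obtain s where s: "T ** T = smat s T" using kernel_fcz[OF k H] by blast
  have "X ** X = smat (s + 2*z) X + smat (- s*z - z*z) (mat 1)"
    using s unfolding T_def
    by (simp add: vec_eq_iff forall_3 mm3 smat_nth mat_nth algebra_simps)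
  then show ?thesis by blast
qed


(* ---- from NT.thy ---- *)


definition ww :: "nat \<Rightarrow> complex" where "ww d = \<i> * of_real (sqrt (real d))"

lemma ww_sq: "ww d * ww d = - of_nat d"
proof -
  have "ww d * ww d = (\<i> * \<i>) * of_real (sqrt (real d) * sqrt (real d))"
    unfolding ww_def by (simp only: of_real_mult mult_ac)
  also have "\<dots> = - of_nat d" by simp
  finally show ?thesis .
qed

definition Zw :: "nat \<Rightarrow> complex set" where
  "Zw d = {of_int m + of_int n * ww d | m n. True}"

definition LL :: "nat \<Rightarrow> int \<Rightarrow> complex set" where
  "LL d D = {z. of_int D * z \<in> Zw d}"

lemma Zw_add: "x \<in> Zw d \<Longrightarrow> y \<in> Zw d \<Longrightarrow> x + y \<in> Zw d"
  unfolding Zw_def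
  by (auto, rule_tac x="m+ma" in exI, rule_tac x="n+na" in exI, simp add: algebra_simps)

lemma Zw_uminus: "x \<in> Zw d \<Longrightarrow> - x \<in> Zw d"
  unfolding Zw_def by (auto, rule_tac x="-m" in exI, rule_tac x="-n" in exI, simp add: algebra_simps)

lemma Zw_mult: "x \<in> Zw d \<Longrightarrow> y \<in> Zw d \<Longrightarrow> x * y \<in> Zw d"
proof -
  assume "x \<in> Zw d" "y \<in> Zw d"
  then obtain m n m' n' where x: "x = of_int m + of_int n * ww d" and y: "y = of_int m' + of_int n' * ww d"
    unfolding Zw_def by blast
  have "x * y = of_int m * of_int m' + of_int n * of_int n' * (ww d * ww d) + (of_int m * of_int n' + of_int n * of_int m') * ww d"
    unfolding x y by (simp add: algebra_simps)
  also have "\<dots> = of_int (m*m' - int d * n * n') + of_int (m*n' + n*m') * ww d"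
    unfolding ww_sq by (simp add: algebra_simps)
  finally have "x * y = of_int (m*m' - int d * n * n') + of_int (m*n' + n*m') * ww d" .
  then show ?thesis unfolding Zw_def by blast
qed

lemma Zw_int: "of_int k \<in> Zw d"
  unfolding Zw_def by (rule CollectI, rule exI[of _ k], rule exI[of _ 0], simp)

lemma LL_add: "x \<in> LL d D \<Longrightarrow> y \<in> LL d D \<Longrightarrow> x + y \<in> LL d D"
  unfolding LL_def by (simp add: distrib_left Zw_add)
lemma LL_uminus: "x \<in> LL d D \<Longrightarrow> - x \<in> LL d D"
  unfolding LL_def using Zw_uminus by fastforce
lemma LL_zero: "0 \<in> LL d D"
  unfolding LL_def using Zw_int[of 0] by simp
lemma LL_int: "of_int k \<in> LL d 1"
  unfolding LL_def using Zw_int by simp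
lemma LL_mult: "x \<in> LL d D1 \<Longrightarrow> y \<in> LL d D2 \<Longrightarrow> x * y \<in> LL d (D1 * D2)"
  unfolding LL_def using Zw_mult by (fastforce simp: mult_ac)
lemma LL_mono: "x \<in> LL d D \<Longrightarrow> x \<in> LL d (D * E)"
proof -
  assume "x \<in> LL d D"
  then have "of_int E * (of_int D * x) \<in> Zw d" unfolding LL_def using Zw_mult Zw_int by blast
  then show ?thesis unfolding LL_def by (simp add: mult_ac)
qed
lemma LL_mono': "x \<in> LL d D \<Longrightarrow> x \<in> LL d (E * D)"
  using LL_mono[of x d D E] by (simp add: mult.commute)
lemma LL_sum: "(\<And>i. i \<in> S \<Longrightarrow> f i \<in> LL d D) \<Longrightarrow> sum f S \<in> LL d D"
  by (induction S rule: infinite_finite_induct) (auto simp: LL_zero LL_add)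
lemma LL_pow: "x \<in> LL d D \<Longrightarrow> x ^ k \<in> LL d (D ^ k)"
  by (induction k) (auto simp: LL_mult LL_int[of 1, simplified] intro: LL_mult)

lemma quad_LL: assumes "z \<in> quad_field d" shows "\<exists>D>0. z \<in> LL d D"
proof -
  obtain x y where z: "z = of_rat x + of_rat y * (\<i> * of_real (sqrt (real d)))"
    using assms unfolding quad_field_def by blast
  obtain p1 q1 where pq1: "quotient_of x = (p1, q1)" by (cases "quotient_of x")
  obtain p2 q2 where pq2: "quotient_of y = (p2, q2)" by (cases "quotient_of y")
  have q1: "q1 > 0" using quotient_of_denom_pos[OF pq1] .
  have q2: "q2 > 0" using quotient_of_denom_pos[OF pq2] .
  have x: "(of_rat x :: complex) = of_int p1 / of_int q1" using quotient_of_div[OF pq1]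
    by (simp add: of_rat_divide)
  have y: "(of_rat y :: complex) = of_int p2 / of_int q2" using quotient_of_div[OF pq2]
    by (simp add: of_rat_divide)
  have "of_int (q1*q2) * z = of_int (p1*q2) + of_int (p2*q1) * ww d"
    using q1 q2 unfolding z x y ww_def by (simp add: field_simps)
  then have "z \<in> LL d (q1*q2)" unfolding LL_def Zw_def by blast
  then show ?thesis using q1 q2 by (intro exI[of _ "q1*q2"]) auto
qed

lemma LL_inv: assumes "z \<in> LL d D" "D > 0" "z \<noteq> 0" shows "\<exists>D'>0. inverse z \<in> LL d D'"
proof -
  obtain m n where mn: "of_int D * z = of_int m + of_int n * ww d" using assms(1) unfolding LL_def Zw_def by blast
  have nz: "of_int m + of_int n * ww d \<noteq> 0" using mn assms(2,3) by (metis mult_eq_0_iff of_int_eq_0_iff less_irrefl)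
  have pos: "m^2 + int d * n^2 > 0"
  proof -
    have ge: "m^2 + int d * n^2 \<ge> 0" by simp
    show ?thesis
    proof (rule ccontr)
      assume "\<not> ?thesis"
      then have "m^2 + int d * n^2 = 0" using ge by simp
      then have "m^2 = 0" "int d * n^2 = 0" using ge
        by (smt (verit) mult_nonneg_nonneg of_nat_0_le_iff zero_le_power2)+
      then have "m = 0" "d = 0 \<or> n = 0" by auto
      then show False using nz by (auto simp: ww_def)
    qed
  qed
  have prod: "(of_int m + of_int n * ww d) * (of_int m - of_int n * ww d) = of_int (m^2 + int d * n^2)"
    by (simp add: algebra_simps ww_sq power2_eq_square)
  have "of_int (m^2 + int d * n^2) * inverse z = of_int (D*m) + of_int (-D*n) * ww d"
  proof -
    have "of_int (m^2 + int d * n^2) * inverse z = (of_int m + of_int n * ww d) * (of_int m - of_int n * ww d) * inverse z"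
      using prod by simp
    also have "\<dots> = of_int D * z * (of_int m - of_int n * ww d) * inverse z" using mn by simp
    also have "\<dots> = of_int D * (of_int m - of_int n * ww d)" using assms(3) by (simp add: field_simps)
    finally show ?thesis by (simp add: algebra_simps)
  qed
  then have "inverse z \<in> LL d (m^2 + int d * n^2)" unfolding LL_def Zw_def by blast
  then show ?thesis using pos by blast
qed

lemma finite_LL_ball: assumes "d > 0" "D > 0" shows "finite (LL d D \<inter> {z. cmod z \<le> 1})"
proof -
  let ?f = "\<lambda>(m,n). (of_int m + of_int n * ww d) / (of_int D :: complex)"
  have "LL d D \<inter> {z. cmod z \<le> 1} \<subseteq> ?f ` ({-D..D} \<times> {-D..D})"
  proof
    fix z assume z: "z \<in> LL d D \<inter> {z. cmod z \<le> 1}"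
    then obtain m n where mn: "of_int D * z = of_int m + of_int n * ww d" unfolding LL_def Zw_def by blast
    have cm: "cmod (of_int D * z) \<le> of_int D" using z assms
      by (simp add: norm_mult)
    have re: "Re (of_int D * z) = of_int m" using mn by (simp add: ww_def)
    have im: "Im (of_int D * z) = of_int n * sqrt (real d)" using mn by (simp add: ww_def)
    have "\<bar>real_of_int m\<bar> \<le> of_int D" using abs_Re_le_cmod[of "of_int D * z"] cm re by simp
    then have m: "m \<in> {-D..D}" by auto
    have sd: "sqrt (real d) \<ge> 1" using assms by simp
    have "\<bar>Im (of_int D * z)\<bar> \<le> of_int D" using abs_Im_le_cmod[of "of_int D * z"] cm by linarith
    then have "\<bar>real_of_int n * sqrt (real d)\<bar> \<le> of_int D" by (simp only: im)
    then have "\<bar>real_of_int n\<bar> * sqrt (real d) \<le> of_int D" by (simp add: abs_mult)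
    then have "\<bar>real_of_int n\<bar> \<le> of_int D" using sd
      by (smt (verit) mult_le_cancel_left1 abs_ge_zero mult.commute)
    then have n: "n \<in> {-D..D}" by auto
    have "z = ?f (m, n)" using mn assms by (simp add: field_simps)
    then show "z \<in> ?f ` ({-D..D} \<times> {-D..D})" using m n by blast
  qed
  then show ?thesis by (rule finite_subset) auto
qed

lemma rou_aux:
  assumes "d > 0" "D > 0" "y \<noteq> 0" "cmod y \<le> 1" "\<forall>k. y^k \<in> LL d D"
  shows "\<exists>m>0. y^m = 1"
proof -
  have "range (\<lambda>k. y^k) \<subseteq> LL d D \<inter> {z. cmod z \<le> 1}"
    using assms by (auto simp: norm_power power_le_one)
  then have "finite (range (\<lambda>k::nat. y^k))" using finite_LL_ball[OF assms(1,2)] finite_subset by blast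
  then have "\<not> inj (\<lambda>k::nat. y^k)" using finite_imageD infinite_UNIV_nat by blast
  then obtain i j where ij: "i \<noteq> j" "y^i = y^j" unfolding inj_def by blast
  show ?thesis
  proof (cases "i < j")
    case True
    then have "y^j = y^i * y^(j-i)" by (simp add: power_add[symmetric])
    then have "y^(j-i) = 1" using ij assms(3) by simp
    then show ?thesis using True by (intro exI[of _ "j-i"]) auto
  next
    case False
    then have "j < i" using ij by simp
    then have "y^i = y^j * y^(i-j)" by (simp add: power_add[symmetric])
    then have "y^(i-j) = 1" using ij assms(3) by simp
    then show ?thesis using \<open>j < i\<close> by (intro exI[of _ "i-j"]) auto
  qed
qed

lemma rou:
  assumes "d > 0" "D1 > 0" "D2 > 0" "z \<noteq> 0" "\<forall>k. z^k \<in> LL d D1" "\<forall>k. (inverse z)^k \<in> LL d D2"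
  shows "\<exists>m>0. z^m = 1"
proof (cases "cmod z \<le> 1")
  case True show ?thesis using rou_aux[OF assms(1,2,4) True assms(5)] by blast
next
  case False
  then have "cmod (inverse z) \<le> 1" by (simp add: norm_inverse inverse_le_1_iff)
  then obtain m where "m > 0" "(inverse z)^m = 1" using rou_aux[OF assms(1,3) _ _ assms(6)] assms(4) by auto
  then show ?thesis by (metis inverse_1 power_inverse inverse_inverse_eq)
qed

lemma lemG:
  fixes z :: complex and R :: "complex set" and cs :: "nat \<Rightarrow> complex"
  assumes R0: "0 \<in> R" and R1: "1 \<in> R" and Radd: "\<And>x y. x \<in> R \<Longrightarrow> y \<in> R \<Longrightarrow> x + y \<in> R"
    and Rmul: "\<And>x y. x \<in> R \<Longrightarrow> y \<in> R \<Longrightarrow> x * y \<in> R" and RL: "R \<subseteq> LL d D0" and D0: "D0 > 0"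
    and n: "n > 0" and cs: "\<And>j. j < n \<Longrightarrow> cs j \<in> R" and eq: "z^n = (\<Sum>j<n. cs j * z^j)"
    and zL: "z \<in> LL d D1" and D1: "D1 > 0"
  shows "\<exists>D>0. \<forall>k. z^k \<in> LL d D"
proof -
  obtain n' where n': "n = Suc n'" using n by (cases n) auto
  have rep: "\<exists>e. (\<forall>j<n. e j \<in> R) \<and> z^k = (\<Sum>j<n. e j * z^j)" for k
  proof (induction k)
    case 0
    have "(\<Sum>j<n. (if j = 0 then 1 else 0) * z^j) = (\<Sum>j<n. if j = 0 then z^j else 0)" by (rule sum.cong) auto
    also have "\<dots> = z^0" using n by (simp add: sum.delta)
    finally show ?case
      by (intro exI[of _ "\<lambda>j. if j = 0 then 1 else 0"]) (use R0 R1 in auto)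
  next
    case (Suc k)
    then obtain e where e: "\<forall>j<n. e j \<in> R" and zk: "z^k = (\<Sum>j<n. e j * z^j)" by blast
    define e' where "e' j = (if j = 0 then 0 else e (j - 1)) + e n' * cs j" for j
    have "(\<Sum>j<n. e' j * z^j) = (\<Sum>j<n. (if j = 0 then 0 else e (j - 1)) * z^j) + e n' * (\<Sum>j<n. cs j * z^j)"
      by (simp add: e'_def algebra_simps sum.distrib sum_distrib_left)
    also have "(\<Sum>j<n. (if j = 0 then 0 else e (j - 1)) * z^j) = (\<Sum>j<n'. e j * z^(Suc j))"
      unfolding n' by (subst sum.lessThan_Suc_shift) simp
    also have "e n' * (\<Sum>j<n. cs j * z^j) = e n' * z^(Suc n')" using eq n' by simp
    also have "(\<Sum>j<n'. e j * z^(Suc j)) + e n' * z^(Suc n') = (\<Sum>j<n. e j * z^(Suc j))"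
      unfolding n' by simp
    also have "\<dots> = z^(Suc k)" by (simp add: zk sum_distrib_left mult_ac)
    finally have "z^(Suc k) = (\<Sum>j<n. e' j * z^j)" by simp
    moreover have "\<forall>j<n. e' j \<in> R"
    proof (intro allI impI)
      fix j assume "j < n"
      have "(if j = 0 then 0 else e (j - 1)) \<in> R" using R0 e \<open>j < n\<close> by auto
      then show "e' j \<in> R" unfolding e'_def using Radd Rmul e cs \<open>j < n\<close> n' by auto
    qed
    ultimately show ?case by blast
  qed
  have zj: "z^j \<in> LL d (D1^n)" if "j < n" for j
  proof -
    have "z^j \<in> LL d (D1^j)" using LL_pow[OF zL] .
    then have "z^j \<in> LL d (D1^j * D1^(n-j))" by (rule LL_mono)
    then show ?thesis using that by (simp add: power_add[symmetric])
  qed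
  have "z^k \<in> LL d (D0 * D1^n)" for k
  proof -
    obtain e where e: "\<forall>j<n. e j \<in> R" and zk: "z^k = (\<Sum>j<n. e j * z^j)" using rep by blast
    show ?thesis unfolding zk
      by (rule LL_sum) (use e RL zj in \<open>auto intro!: LL_mult\<close>)
  qed
  moreover have "D0 * D1^n > 0" using D0 D1 by simp
  ultimately show ?thesis by blast
qed

lemma Ints_LL: "\<int> \<subseteq> LL d 1"
  using LL_int by (auto elim!: Ints_cases)

lemma algint_BDP:
  assumes "z \<in> O_d d" shows "\<exists>D>0. \<forall>k. z^k \<in> LL d D"
proof -
  have zq: "z \<in> quad_field d" and ai: "algebraic_integer z" using assms unfolding O_d_def by auto
  obtain D1 where D1: "D1 > 0" "z \<in> LL d D1" using quad_LL[OF zq] by blast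
  obtain p :: "int poly" where p: "lead_coeff p = 1" "poly (map_poly of_int p) z = 0"
    using ai unfolding algebraic_integer_def by blast
  define n where "n = degree p"
  have dm: "degree (map_poly (of_int :: int \<Rightarrow> complex) p) = n" unfolding n_def by (rule degree_map_poly) simp
  have n: "n > 0"
  proof (rule ccontr)
    assume "\<not> n > 0"
    then have "n = 0" by simp
    then have "poly (map_poly (of_int :: int \<Rightarrow> complex) p) z = of_int (coeff p 0)"
      using dm by (simp add: poly_altdef coeff_map_poly)
    then show False using p \<open>n = 0\<close> n_def by simp
  qed
  obtain n' where n': "n = Suc n'" using n by (cases n) auto
  have "0 = (\<Sum>i\<le>n. of_int (coeff p i) * z^i)"
    using p(2) dm by (simp add: poly_altdef coeff_map_poly)
  also have "\<dots> = (\<Sum>i<n. of_int (coeff p i) * z^i) + z^n"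
    using p(1) n_def by (simp add: n' lessThan_Suc_atMost[symmetric])
  finally have eq: "z^n = (\<Sum>j<n. (- of_int (coeff p j)) * z^j)"
    by (simp add: sum_negf eq_neg_iff_add_eq_0 add.commute)
  show ?thesis
    by (rule lemG[of \<int> d 1 n "\<lambda>j. - of_int (coeff p j)" z D1])
       (use Ints_LL n eq D1 in auto)
qed


(* ---- from R3.thy ---- *)


typedef m3 = "UNIV :: (complex^3^3) set" morphisms rep3 abs3 by simp

instantiation m3 :: ring_1
begin
definition "x + y = abs3 (rep3 x + rep3 y)"
definition "x * y = abs3 (rep3 x ** rep3 y)"
definition "0 = abs3 0"
definition "1 = abs3 (mat 1)"
definition "- x = abs3 (- rep3 x)"
definition "x - y = abs3 (rep3 x - rep3 y)"
instance
proof
  fix x y z :: m3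
  show "x * y * z = x * (y * z)" by (simp add: times_m3_def abs3_inverse matrix_mul_assoc)
  show "x + y + z = x + (y + z)" by (simp add: plus_m3_def abs3_inverse add.assoc)
  show "x + y = y + x" by (simp add: plus_m3_def add.commute)
  show "0 + x = x" by (simp add: plus_m3_def zero_m3_def abs3_inverse rep3_inverse)
  show "- x + x = 0" by (simp add: plus_m3_def zero_m3_def uminus_m3_def abs3_inverse)
  show "x - y = x + - y" by (simp add: plus_m3_def minus_m3_def uminus_m3_def abs3_inverse)
  show "1 * x = x" by (simp add: times_m3_def one_m3_def abs3_inverse rep3_inverse)
  show "x * 1 = x" by (simp add: times_m3_def one_m3_def abs3_inverse rep3_inverse)
  have rd: "(A + B) ** C = A ** C + B ** C" for A B C :: "complex^3^3"
    by (simp add: vec_eq_iff matrix_matrix_mult_def sum.distrib algebra_simps)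
  show "(x + y) * z = x * z + y * z"
    by (simp add: times_m3_def plus_m3_def abs3_inverse rd)
  show "x * (y + z) = x * y + x * z"
    by (simp add: times_m3_def plus_m3_def abs3_inverse matrix_add_ldistrib)
  show "(0::m3) \<noteq> 1"
  proof
    assume "(0::m3) = 1"
    then have "(0::complex^3^3) = mat 1" by (simp add: zero_m3_def one_m3_def abs3_inject)
    then have "(0::complex^3^3)$1$1 = (mat 1::complex^3^3)$1$1" by simp
    then show False by (simp add: mat_nth)
  qed
qed
end

definition ent :: "m3 \<Rightarrow> 3 \<Rightarrow> 3 \<Rightarrow> complex" where "ent x i j = rep3 x $ i $ j"
definition sc :: "complex \<Rightarrow> m3" where "sc z = abs3 (mat z)"
definition tr3 :: "m3 \<Rightarrow> complex" where "tr3 x = ent x 1 1 + ent x 2 2 + ent x 3 3"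
definition c13 :: "m3 \<Rightarrow> complex" where
  "c13 x = ent x 1 1 * ent x 2 2 + ent x 1 1 * ent x 3 3 + ent x 2 2 * ent x 3 3
          - ent x 1 2 * ent x 2 1 - ent x 1 3 * ent x 3 1 - ent x 2 3 * ent x 3 2"
definition det3 :: "m3 \<Rightarrow> complex" where "det3 x = det (rep3 x)"

lemma rep3_mult: "rep3 (x * y) = rep3 x ** rep3 y" by (simp add: times_m3_def abs3_inverse)
lemma rep3_one: "rep3 1 = mat 1" by (simp add: one_m3_def abs3_inverse)

lemma ent_mult: "ent (x * y) i j = ent x i 1 * ent y 1 j + ent x i 2 * ent y 2 j + ent x i 3 * ent y 3 j"
  by (simp add: ent_def times_m3_def abs3_inverse mm3)
lemma ent_add: "ent (x + y) i j = ent x i j + ent y i j" by (simp add: ent_def plus_m3_def abs3_inverse)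
lemma ent_diff: "ent (x - y) i j = ent x i j - ent y i j" by (simp add: ent_def minus_m3_def abs3_inverse)
lemma ent_uminus: "ent (- x) i j = - ent x i j" by (simp add: ent_def uminus_m3_def abs3_inverse)
lemma ent_zero: "ent 0 i j = 0" by (simp add: ent_def zero_m3_def abs3_inverse)
lemma ent_one: "ent 1 i j = (if i = j then 1 else 0)" by (simp add: ent_def one_m3_def abs3_inverse mat_nth)
lemma ent_sc: "ent (sc z) i j = (if i = j then z else 0)" by (simp add: ent_def sc_def abs3_inverse mat_nth)
lemma m3_eq: "x = y \<longleftrightarrow> (\<forall>i j. ent x i j = ent y i j)"
  by (metis ent_def rep3_inject vec_eq_iff)
lemma m3_eq9: "x = y \<longleftrightarrow> ent x 1 1 = ent y 1 1 \<and> ent x 1 2 = ent y 1 2 \<and> ent x 1 3 = ent y 1 3 \<and>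
   ent x 2 1 = ent y 2 1 \<and> ent x 2 2 = ent y 2 2 \<and> ent x 2 3 = ent y 2 3 \<and>
   ent x 3 1 = ent y 3 1 \<and> ent x 3 2 = ent y 3 2 \<and> ent x 3 3 = ent y 3 3"
  unfolding m3_eq forall_3 by blast

lemmas ent_simps = ent_mult ent_add ent_diff ent_uminus ent_zero ent_one ent_sc

lemma sc_add: "sc (p + q) = sc p + sc q" by (simp add: m3_eq ent_simps)
lemma sc_diff: "sc (p - q) = sc p - sc q" by (simp add: m3_eq ent_simps)
lemma sc_mult: "sc (p * q) = sc p * sc q" by (simp add: m3_eq9 ent_simps)
lemma sc_one: "sc 1 = 1" by (simp add: m3_eq ent_simps)
lemma sc_zero: "sc 0 = 0" by (simp add: m3_eq ent_simps)
lemma sc_uminus: "sc (- p) = - sc p" by (simp add: m3_eq ent_simps)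
lemma sc_comm: "x * sc p = sc p * x" by (simp add: m3_eq9 ent_simps mult.commute)
lemma sc_comm2: "x * (sc p * y) = sc p * (x * y)" by (metis mult.assoc sc_comm)
lemma sc_sc: "sc p * (sc q * y) = sc (p * q) * y" by (simp add: mult.assoc[symmetric] sc_mult)
lemma sc_pow: "sc p ^ k = sc (p ^ k)" by (induction k) (simp_all add: sc_one sc_mult)
lemma ent_scmult: "ent (sc p * x) i j = p * ent x i j"
  using exhaust_3[of i] by (auto simp: ent_simps)

lemma tr3_add: "tr3 (x + y) = tr3 x + tr3 y" by (simp add: tr3_def ent_simps)
lemma tr3_diff: "tr3 (x - y) = tr3 x - tr3 y" by (simp add: tr3_def ent_simps)
lemma tr3_uminus: "tr3 (- x) = - tr3 x" by (simp add: tr3_def ent_simps)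
lemma tr3_zero: "tr3 0 = 0" by (simp add: tr3_def ent_simps)
lemma tr3_sc: "tr3 (sc p) = 3 * p" by (simp add: tr3_def ent_simps)
lemma tr3_scmult: "tr3 (sc p * x) = p * tr3 x" by (simp add: tr3_def ent_scmult algebra_simps)
lemma tr3_comm: "tr3 (x * y) = tr3 (y * x)" by (simp add: tr3_def ent_simps algebra_simps)

lemma det3_mult: "det3 (x * y) = det3 x * det3 y" by (simp add: det3_def rep3_mult det_mul)
lemma det3_one: "det3 1 = 1" by (simp add: det3_def rep3_one)
lemma det3_ent: "det3 x = ent x 1 1 * ent x 2 2 * ent x 3 3 + ent x 1 2 * ent x 2 3 * ent x 3 1 +
    ent x 1 3 * ent x 2 1 * ent x 3 2 - ent x 1 1 * ent x 2 3 * ent x 3 2 -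
    ent x 1 2 * ent x 2 1 * ent x 3 3 - ent x 1 3 * ent x 2 2 * ent x 3 1"
  by (simp add: det3_def det_3 ent_def)
lemma det3_sc: "det3 (sc p) = p ^ 3" by (simp add: det3_ent ent_simps power3_eq_cube)

lemma cayley_hamilton: "x * x * x = sc (tr3 x) * (x * x) - sc (c13 x) * x + sc (det3 x)"
  by (simp add: m3_eq9 ent_simps tr3_def c13_def det3_ent algebra_simps)

lemma tr3_sq: "tr3 (x * x) = (tr3 x)^2 - 2 * c13 x"
  by (simp add: tr3_def c13_def ent_simps algebra_simps power2_eq_square)

lemma adj_id: "x * x = 0 \<Longrightarrow> tr3 x = 0 \<and> c13 x = 0"
proof -
  assume xx: "x * x = 0"
  have "x * x * x = 0" by (simp add: xx)
  then have ch: "sc (c13 x) * x = sc (det3 x)" using cayley_hamilton[of x] xx by (simp add: algebra_simps)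
  have d0: "det3 0 = 0" by (simp add: det3_ent ent_simps)
  have "det3 x * det3 x = 0" using xx det3_mult[of x x] d0 by simp
  then have "det3 x = 0" by simp
  then have ch2: "sc (c13 x) * x = 0" using ch by (simp add: sc_zero)
  have c: "c13 x = 0"
  proof (rule ccontr)
    assume "c13 x \<noteq> 0"
    then have "x = 0" using ch2
      by (metis mult.assoc mult_1 sc_mult sc_one sc_zero mult_zero_right divide_self_if times_divide_eq_left)
    then show False using \<open>c13 x \<noteq> 0\<close> by (simp add: c13_def ent_simps)
  qed
  have "tr3 (x * x) = 0" by (simp add: xx tr3_zero)
  then have "(tr3 x)^2 = 0" using tr3_sq[of x] c by simp
  then show ?thesis using c by simp
qed

lemma minors_zero:
  assumes "x * x = 0"
  shows "ent x i k * ent x l j = ent x l k * ent x i j"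
proof -
  have t: "tr3 x = 0" and cc: "c13 x = 0" using adj_id[OF assms] by auto
  have e: "\<And>i j. ent (x * x) i j = 0" using assms by (simp add: ent_zero)
  have E: "ent x 1 1 + ent x 2 2 + ent x 3 3 = 0"
     "ent x 1 1 * ent x 2 2 + ent x 1 1 * ent x 3 3 + ent x 2 2 * ent x 3 3
          - ent x 1 2 * ent x 2 1 - ent x 1 3 * ent x 3 1 - ent x 2 3 * ent x 3 2 = 0"
    using t cc by (simp_all add: tr3_def c13_def)
  have m: "ent x 1 1 * ent x 2 2 = ent x 1 2 * ent x 2 1"
          "ent x 1 1 * ent x 3 3 = ent x 1 3 * ent x 3 1"
          "ent x 2 2 * ent x 3 3 = ent x 2 3 * ent x 3 2"
          "ent x 1 1 * ent x 2 3 = ent x 1 3 * ent x 2 1"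
          "ent x 1 1 * ent x 3 2 = ent x 1 2 * ent x 3 1"
          "ent x 2 2 * ent x 1 3 = ent x 2 3 * ent x 1 2"
          "ent x 2 2 * ent x 3 1 = ent x 2 1 * ent x 3 2"
          "ent x 3 3 * ent x 1 2 = ent x 3 2 * ent x 1 3"
          "ent x 3 3 * ent x 2 1 = ent x 3 1 * ent x 2 3"
    using E e[of 1 1] e[of 2 2] e[of 3 3] e[of 1 2] e[of 1 3] e[of 2 1] e[of 2 3] e[of 3 1] e[of 3 2]
    unfolding ent_mult by algebra+
  have "\<forall>i k l j. ent x i k * ent x l j = ent x l k * ent x i j"
    unfolding forall_3 using m by (auto simp: ac_simps)
  then show ?thesis by blast
qed

lemma nyn: assumes "x * x = 0" shows "x * y * x = sc (tr3 (x * y)) * x"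
proof -
  have mz: "\<And>i k l j. ent x i k * ent x l j = ent x l k * ent x i j" using minors_zero[OF assms] by blast
  have "ent (x * y * x) i j = ent (sc (tr3 (x * y)) * x) i j" for i j
  proof -
    have "ent (x * y * x) i j = (\<Sum>k\<in>UNIV. \<Sum>l\<in>UNIV. ent x i k * ent y k l * ent x l j)"
      by (simp add: ent_mult sum_3 algebra_simps)
    also have "\<dots> = (\<Sum>k\<in>UNIV. \<Sum>l\<in>UNIV. ent x l k * ent y k l * ent x i j)"
      by (intro sum.cong refl) (metis mult.commute mult.left_commute mz)
    also have "\<dots> = tr3 (x * y) * ent x i j"
      unfolding tr3_def ent_mult sum_3 by (simp add: algebra_simps)
    also have "\<dots> = ent (sc (tr3 (x * y)) * x) i j" by (simp only: ent_scmult)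
    finally show ?thesis .
  qed
  then show ?thesis by (simp add: m3_eq)
qed


(* ---- from F1.thy ---- *)


inductive_set Mono :: "complex set \<Rightarrow> complex set" for F where
  mono1: "1 \<in> Mono F"
| monoF: "f \<in> F \<Longrightarrow> m \<in> Mono F \<Longrightarrow> f * m \<in> Mono F"

inductive_set Rg :: "complex set \<Rightarrow> complex set" for F where
  rgM: "m \<in> Mono F \<Longrightarrow> m \<in> Rg F"
| rg0: "0 \<in> Rg F"
| rgadd: "x \<in> Rg F \<Longrightarrow> y \<in> Rg F \<Longrightarrow> x + y \<in> Rg F"
| rgneg: "x \<in> Rg F \<Longrightarrow> - x \<in> Rg F"

lemma Mono_mult: "m1 \<in> Mono F \<Longrightarrow> m2 \<in> Mono F \<Longrightarrow> m1 * m2 \<in> Mono F"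
  by (induction m1 rule: Mono.induct) (simp_all add: mult.assoc Mono.monoF)

lemma Rg_mult_Mono: "x \<in> Rg F \<Longrightarrow> m \<in> Mono F \<Longrightarrow> x * m \<in> Rg F"
  by (induction x rule: Rg.induct) (simp_all add: distrib_right Rg.rgM Rg.rg0 Rg.rgadd Rg.rgneg Mono_mult)

lemma Rg_mult: assumes "x \<in> Rg F" "y \<in> Rg F" shows "x * y \<in> Rg F"
  using assms(2)
proof (induction y rule: Rg.induct)
  case (rgM m) then show ?case using assms(1) by (rule Rg_mult_Mono[rotated])
qed (simp_all add: distrib_left Rg.rg0 Rg.rgadd Rg.rgneg)

lemma Rg_1: "1 \<in> Rg F" by (rule Rg.rgM[OF Mono.mono1])
lemma Rg_F: assumes "f \<in> F" shows "f \<in> Rg F"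
proof -
  have "f * 1 \<in> Mono F" by (rule monoF[OF assms mono1])
  then show ?thesis using rgM by fastforce
qed
lemma Rg_diff: assumes "x \<in> Rg F" "y \<in> Rg F" shows "x - y \<in> Rg F"
proof -
  have "x + (- y) \<in> Rg F" by (rule rgadd[OF assms(1) rgneg[OF assms(2)]])
  then show ?thesis by simp
qed
lemma Rg_pow: "x \<in> Rg F \<Longrightarrow> x ^ k \<in> Rg F"
  by (induction k) (simp_all add: Rg_1 Rg_mult)
lemma Rg_num: "of_nat n \<in> Rg F"
  by (induction n) (simp_all add: Rg_1 rg0 rgadd)

lemmas Rg_intros = rg0 rgadd rgneg Rg_1 Rg_mult Rg_diff Rg_pow

lemma Mono_LL:
  assumes "finite F" "\<forall>f\<in>F. \<exists>D>0. \<forall>k. f^k \<in> LL d D"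
  shows "\<exists>D>0. Mono F \<subseteq> LL d D"
  using assms
proof (induction F rule: finite_induct)
  case empty
  have "m \<in> Mono {} \<Longrightarrow> m = 1" for m by (induction m rule: Mono.induct) auto
  then show ?case using LL_int[of 1 d] by (intro exI[of _ 1]) auto
next
  case (insert f F)
  obtain DF where DF: "DF > 0" "Mono F \<subseteq> LL d DF" using insert by auto
  obtain Df where Df: "Df > 0" "\<forall>k. f^k \<in> LL d Df" using insert.prems by auto
  have rep: "m \<in> Mono (insert f F) \<Longrightarrow> \<exists>i m'. m' \<in> Mono F \<and> m = f^i * m'" for m
  proof (induction m rule: Mono.induct)
    case mono1 then show ?case by (intro exI[of _ 0] exI[of _ 1]) (auto intro: Mono.intros)
  next
    case (monoF g m)
    then obtain i m' where im: "m' \<in> Mono F" "m = f^i * m'" by blast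
    show ?case
    proof (cases "g = f")
      case True then show ?thesis using im by (intro exI[of _ "Suc i"] exI[of _ m']) (auto simp: mult_ac)
    next
      case False then have "g \<in> F" using monoF by auto
      then show ?thesis using im by (intro exI[of _ i] exI[of _ "g * m'"]) (auto simp: mult_ac intro: Mono.intros)
    qed
  qed
  have "Mono (insert f F) \<subseteq> LL d (Df * DF)"
  proof
    fix m assume "m \<in> Mono (insert f F)"
    then obtain i m' where "m' \<in> Mono F" "m = f^i * m'" using rep by blast
    then show "m \<in> LL d (Df * DF)" using Df DF by (auto intro: LL_mult)
  qed
  then show ?case using Df DF by (intro exI[of _ "Df * DF"]) auto
qed

lemma Rg_LL:
  assumes "finite F" "F \<subseteq> O_d d"
  shows "\<exists>D>0. Rg F \<subseteq> LL d D"
proof -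
  have "\<forall>f\<in>F. \<exists>D>0. \<forall>k. f^k \<in> LL d D" using assms algint_BDP by blast
  then obtain D where D: "D > 0" "Mono F \<subseteq> LL d D" using Mono_LL[OF assms(1)] by blast
  have "x \<in> Rg F \<Longrightarrow> x \<in> LL d D" for x
    by (induction x rule: Rg.induct) (use D in \<open>auto intro: LL_add LL_uminus LL_zero\<close>)
  then show ?thesis using D by blast
qed

lemma LL_diff: assumes "x \<in> LL d D" "y \<in> LL d D" shows "x - y \<in> LL d D"
proof -
  have "x + (- y) \<in> LL d D" by (rule LL_add[OF assms(1) LL_uminus[OF assms(2)]])
  then show ?thesis by simp
qed

lemma sum3: "(\<Sum>j<(3::nat). f j) = f 0 + f 1 + f 2"
  by (simp add: eval_nat_numeral lessThan_Suc add_ac)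

lemma cubic_BDP:
  assumes RL: "Rg F \<subseteq> LL d D0" "D0 > 0" and zL: "z \<in> LL d Dz" "Dz > 0"
    and co: "a0 \<in> Rg F" "a1 \<in> Rg F" "a2 \<in> Rg F" and eq: "z^3 = a2 * z^2 + a1 * z + a0"
  shows "\<exists>D>0. \<forall>k. z^k \<in> LL d D"
proof (rule lemG[of "Rg F" d D0 3 "\<lambda>j. if j = 0 then a0 else if j = 1 then a1 else a2" z Dz])
  show "z^3 = (\<Sum>j<3. (if j = 0 then a0 else if j = 1 then a1 else a2) * z^j)"
    unfolding sum3 eq by (simp add: power2_eq_square)
qed (use assms in \<open>simp_all add: rg0 Rg_1 rgadd Rg_mult\<close>)

lemma cubic_rou:
  assumes d: "d > 0" and RL: "Rg F \<subseteq> LL d D0" "D0 > 0" and zL: "z \<in> LL d Dz" "Dz > 0" and z0: "z \<noteq> 0"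
    and co: "tau \<in> Rg F" "cc \<in> Rg F" "dl \<in> Rg F" "dl' \<in> Rg F" "dl * dl' = 1"
    and eq: "z^3 = tau * z^2 - cc * z + dl"
  shows "\<exists>m>0. z^m = 1"
proof -
  have eq': "z^3 = tau * z^2 + (-cc) * z + dl" using eq by simp
  obtain D1 where D1: "D1 > 0" "\<forall>k. z^k \<in> LL d D1"
    using cubic_BDP[OF RL zL co(3) rgneg[OF co(2)] co(1) eq'] by blast
  obtain Dy where Dy: "Dy > 0" "inverse z \<in> LL d Dy" using LL_inv[OF zL(1) zL(2) z0] by blast
  have "(inverse z)^3 = (dl' * cc) * (inverse z)^2 + (- dl' * tau) * inverse z + dl'"
  proof -
    define y where "y = inverse z"
    have zy: "z * y = 1" using z0 unfolding y_def by simp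
    have dl: "dl = z^3 - tau * z^2 + cc * z" using eq by simp
    have "dl * y^3 = (z^3 - tau * z^2 + cc * z) * y^3" using dl by simp
    also have "\<dots> = (z*y)^3 - tau * (z*y)^2 * y + cc * (z*y) * y^2"
      by (simp add: algebra_simps power2_eq_square power3_eq_cube)
    also have "\<dots> = 1 - tau * y + cc * y^2" using zy by simp
    finally have "dl * (inverse z)^3 = 1 - tau * inverse z + cc * (inverse z)^2" unfolding y_def .
    then have "dl' * (dl * (inverse z)^3) = dl' * (1 - tau * inverse z + cc * (inverse z)^2)" by simp
    then have "(dl' * dl) * (inverse z)^3 = dl' * (1 - tau * inverse z + cc * (inverse z)^2)" by (simp only: mult.assoc)
    then have "(inverse z)^3 = dl' * (1 - tau * inverse z + cc * (inverse z)^2)" using co(5) by (simp add: mult.commute)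
    then show ?thesis by (simp add: algebra_simps)
  qed
  then obtain D2 where D2: "D2 > 0" "\<forall>k. (inverse z)^k \<in> LL d D2"
    using cubic_BDP[OF RL Dy(2) Dy(1) co(4) Rg_mult[OF rgneg[OF co(4)] co(1)] Rg_mult[OF co(4) co(2)]] by blast
  show ?thesis using rou[OF d D1(1) D2(1) z0 D1(2) D2(2)] .
qed


(* ---- from F2.thy ---- *)


lemma derog_m3:
  assumes XC: "X * C = C * X" and XD: "X * D = D * X" and CD: "C * D \<noteq> D * C"
  shows "\<exists>s t. X * X = sc s * X + sc t"
proof -
  have 1: "rep3 X ** rep3 C = rep3 C ** rep3 X" using XC by (metis rep3_mult)
  have 2: "rep3 X ** rep3 D = rep3 D ** rep3 X" using XD by (metis rep3_mult)
  have 3: "rep3 C ** rep3 D \<noteq> rep3 D ** rep3 C" using CD by (metis rep3_mult rep3_inject)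
  obtain s t where st: "rep3 X ** rep3 X = smat s (rep3 X) + smat t (mat 1)" using derog3[OF 1 2 3] by blast
  have "ent (X * X) i j = ent (sc s * X + sc t) i j" for i j
  proof -
    have "ent (X * X) i j = (smat s (rep3 X) + smat t (mat 1)) $ i $ j"
      by (simp add: ent_def rep3_mult st)
    also have "\<dots> = s * ent X i j + (if i = j then t else 0)" by (simp add: smat_nth mat_nth ent_def)
    also have "\<dots> = ent (sc s * X + sc t) i j" by (simp add: ent_add ent_scmult ent_sc)
    finally show ?thesis .
  qed
  then show ?thesis by (auto simp: m3_eq)
qed

lemma lin_mult_pure: "(sc p1 * X + sc q1) * (sc p2 * X + sc q2) = sc (p1 * p2) * (X * X) + sc (p1 * q2 + q1 * p2) * X + sc (q1 * q2)"
  by (simp add: m3_eq9 ent_add ent_mult ent_sc algebra_simps)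

lemma lin_sub_pure: "sc p * (sc s * X + sc t) + sc q * X + sc r = sc (p * s + q) * X + sc (p * t + r)"
  by (simp add: m3_eq9 ent_add ent_scmult ent_sc algebra_simps)

lemma lin_mult:
  assumes XX: "X * X = sc s * X + sc t"
  shows "(sc p1 * X + sc q1) * (sc p2 * X + sc q2) = sc (p1 * p2 * s + p1 * q2 + q1 * p2) * X + sc (p1 * p2 * t + q1 * q2)"
proof -
  have "(sc p1 * X + sc q1) * (sc p2 * X + sc q2) = sc (p1 * p2) * (sc s * X + sc t) + sc (p1 * q2 + q1 * p2) * X + sc (q1 * q2)"
    unfolding lin_mult_pure XX ..
  also have "\<dots> = sc (p1 * p2 * s + p1 * q2 + q1 * p2) * X + sc (p1 * p2 * t + q1 * q2)"
    unfolding lin_sub_pure by (simp add: algebra_simps)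
  finally show ?thesis .
qed

lemma lin_X: "X = sc 1 * X + sc 0" by (simp add: sc_one sc_zero)

lemma lin_eq0:
  assumes ns: "\<forall>k. X \<noteq> sc k" and eq: "sc p * X + sc q = 0"
  shows "p = 0 \<and> q = 0"
proof -
  have e: "p * ent X i j + (if i = j then q else 0) = 0" for i j
    using eq[THEN arg_cong[where f="\<lambda>M. ent M i j"]] by (simp add: ent_add ent_scmult ent_sc ent_zero)
  have p: "p = 0"
  proof (rule ccontr)
    assume "p \<noteq> 0"
    have "ent X i j = ent (sc (- q / p)) i j" for i j
    proof (cases "i = j")
      case True
      then have "p * ent X i j = - q" using e[of i j] by (simp add: eq_neg_iff_add_eq_0)
      then have pe: "p * ent X i j = - q" .
      have "ent X i j = (p * ent X i j) / p" using \<open>p \<noteq> 0\<close> by simp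
      also have "\<dots> = - q / p" using pe by simp
      finally have "ent X i j = - q / p" .
      then show ?thesis using True by (simp add: ent_sc)
    next
      case False
      then show ?thesis using e[of i j] \<open>p \<noteq> 0\<close> by (simp add: ent_sc)
    qed
    then have "X = sc (- q / p)" by (simp add: m3_eq)
    then show False using ns by blast
  qed
  then have "q = 0" using e[of 1 1] by simp
  with p show ?thesis by simp
qed

lemma lin_eq:
  assumes ns: "\<forall>k. X \<noteq> sc k" and eq: "sc p1 * X + sc q1 = sc p2 * X + sc q2"
  shows "p1 = p2 \<and> q1 = q2"
proof -
  have "sc (p1 - p2) * X + sc (q1 - q2) = (sc p1 * X + sc q1) - (sc p2 * X + sc q2)"
    by (simp add: m3_eq9 ent_add ent_diff ent_scmult ent_sc algebra_simps)
  also have "\<dots> = 0" using eq by simp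
  finally show ?thesis using lin_eq0[OF ns] by fastforce
qed

lemma ch_pure: "sc tau * (sc s * X + sc t) - sc cc * X + sc e = sc (tau * s - cc) * X + sc (tau * t + e)"
  by (simp add: m3_eq9 ent_add ent_diff ent_scmult ent_sc algebra_simps)

lemma eig_struct:
  assumes XX: "X * X = sc s * X + sc t" and ns: "\<forall>k. X \<noteq> sc k"
  shows "s = (tr3 X - s) + (2 * s - tr3 X)" "t = - ((tr3 X - s) * (2 * s - tr3 X))"
    "det3 X = (tr3 X - s)^2 * (2 * s - tr3 X)" "tr3 X = 2 * (tr3 X - s) + (2 * s - tr3 X)"
    "c13 X = (tr3 X - s)^2 + 2 * (tr3 X - s) * (2 * s - tr3 X)"
proof -
  define tau where "tau = tr3 X"
  define cc where "cc = c13 X"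
  define dl where "dl = det3 X"
  have "X * X * X = (sc s * X + sc t) * (sc 1 * X + sc 0)" using XX by (simp add: sc_one sc_zero)
  also have "\<dots> = sc (s * 1 * s + s * 0 + t * 1) * X + sc (s * 1 * t + t * 0)" by (rule lin_mult[OF XX])
  finally have L: "X * X * X = sc (s * s + t) * X + sc (s * t)" by simp
  have "X * X * X = sc tau * (sc s * X + sc t) - sc cc * X + sc dl"
    using cayley_hamilton[of X] XX unfolding tau_def cc_def dl_def by simp
  also have "\<dots> = sc (tau * s - cc) * X + sc (tau * t + dl)" by (rule ch_pure)
  finally have "sc (s * s + t) * X + sc (s * t) = sc (tau * s - cc) * X + sc (tau * t + dl)" using L by simp
  then have E1: "s * s + t = tau * s - cc" and E2: "s * t = tau * t + dl" using lin_eq[OF ns] by blast+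
  have "tr3 (X * X) = s * tau + 3 * t" unfolding XX tau_def by (simp add: tr3_add tr3_scmult tr3_sc)
  then have E3: "s * tau + 3 * t = tau^2 - 2 * cc" using tr3_sq[of X] unfolding tau_def cc_def by simp
  have T: "t = 2 * s * s - 3 * s * tau + tau * tau" using E1 E3 by (simp add: power2_eq_square) algebra
  show "s = (tr3 X - s) + (2 * s - tr3 X)" by simp
  show "t = - ((tr3 X - s) * (2 * s - tr3 X))" using T unfolding tau_def by (simp add: algebra_simps)
  show "tr3 X = 2 * (tr3 X - s) + (2 * s - tr3 X)" by simp
  show "det3 X = (tr3 X - s)^2 * (2 * s - tr3 X)"
    using E2 T unfolding tau_def dl_def by (simp add: power2_eq_square) algebra
  show "c13 X = (tr3 X - s)^2 + 2 * (tr3 X - s) * (2 * s - tr3 X)"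
    using E1 T unfolding tau_def cc_def by (simp add: power2_eq_square) algebra
qed

lemma pow_lin:
  assumes XX: "X * X = sc (l + m) * X + sc (- (l * m))" and lm: "l \<noteq> m"
  shows "X^k = sc ((l^k - m^k)/(l - m)) * X + sc ((l * m^k - m * l^k)/(l - m))"
proof (induction k)
  case 0
  have "(l - m)/(l - m) = 1" using lm by simp
  then show ?case by (simp add: sc_zero sc_one)
next
  case (Suc k)
  let ?p = "(l^k - m^k)/(l - m)" and ?q = "(l * m^k - m * l^k)/(l - m)"
  have "X^Suc k = (sc 1 * X + sc 0) * (sc ?p * X + sc ?q)" using Suc by (simp add: sc_one sc_zero)
  also have "\<dots> = sc (1 * ?p * (l+m) + 1 * ?q + 0 * ?p) * X + sc (1 * ?p * (- (l * m)) + 0 * ?q)"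
    by (rule lin_mult[OF XX])
  also have "1 * ?p * (l + m) + 1 * ?q + 0 * ?p = ((l^k - m^k) * (l + m) + (l * m^k - m * l^k)) / (l - m)"
    by (simp only: mult_1_left mult_zero_left add_0_right times_divide_eq_left add_divide_distrib[symmetric])
  also have "(l^k - m^k) * (l + m) + (l * m^k - m * l^k) = l^Suc k - m^Suc k"
    by (simp add: algebra_simps)
  also have "1 * ?p * (- (l * m)) + 0 * ?q = ((l^k - m^k) * (- (l * m))) / (l - m)"
    by (simp only: mult_1_left mult_zero_left add_0_right times_divide_eq_left)
  also have "(l^k - m^k) * (- (l * m)) = l * m^Suc k - m * l^Suc k"
    by (simp add: algebra_simps)
  finally show ?case .
qed


(* ---- from F3.thy ---- *)


lemma ns_entries:
  assumes ns: "\<forall>k. X \<noteq> sc k"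
  shows "(\<exists>i j. i \<noteq> j \<and> ent X i j \<noteq> 0) \<or> (\<exists>i j. ent X i i \<noteq> ent X j j)"
proof (rule ccontr)
  assume "\<not> ?thesis"
  then have h: "\<And>i j. i \<noteq> j \<Longrightarrow> ent X i j = 0" "\<And>i j. ent X i i = ent X j j" by auto
  have "X = sc (ent X 1 1)" unfolding m3_eq
  proof (intro allI)
    fix i j show "ent X i j = ent (sc (ent X 1 1)) i j"
      using h[of i j] h(2)[of i 1] by (cases "i = j") (simp_all add: ent_sc)
  qed
  then show False using ns by blast
qed

lemma Rg_ent_mult: "(\<And>i j. ent X i j \<in> Rg F) \<Longrightarrow> (\<And>i j. ent Y i j \<in> Rg F) \<Longrightarrow> ent (X * Y) i j \<in> Rg F"
  unfolding ent_mult by (intro rgadd Rg_mult) auto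

lemma Rg_tr3: "(\<And>i j. ent X i j \<in> Rg F) \<Longrightarrow> tr3 X \<in> Rg F"
  unfolding tr3_def by (intro rgadd) auto
lemma Rg_c13: "(\<And>i j. ent X i j \<in> Rg F) \<Longrightarrow> c13 X \<in> Rg F"
  unfolding c13_def by (intro rgadd Rg_diff Rg_mult) auto
lemma Rg_det3: "(\<And>i j. ent X i j \<in> Rg F) \<Longrightarrow> det3 X \<in> Rg F"
  unfolding det3_ent by (intro rgadd Rg_diff Rg_mult) auto

lemma per_elem:
  assumes d: "d > 0" and F: "finite F" "F \<subseteq> O_d d"
    and entX: "\<And>i j. ent X i j \<in> Rg F" and dinv: "dl' \<in> Rg F" "det3 X * dl' = 1"
    and XC: "X * C = C * X" and XD: "X * D = D * X" and CD: "C * D \<noteq> D * C"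
  shows "(\<exists>k>0. X^k = 1) \<or> (\<exists>l N. X = sc l + N \<and> N * N = 0 \<and> tr3 N = 0 \<and> cmod l = 1)"
proof -
  obtain D0 where D0: "D0 > 0" "Rg F \<subseteq> LL d D0" using Rg_LL[OF F] by blast
  have RgLL: "x \<in> Rg F \<Longrightarrow> x \<in> LL d D0" for x using D0 by blast
  show ?thesis
  proof (cases "\<exists>k. X = sc k")
    case True
    then obtain kk where X: "X = sc kk" by blast
    have kR: "kk \<in> Rg F" using entX[of 1 1] X by (simp add: ent_sc)
    have det: "det3 X = kk^3" using X by (simp add: det3_sc)
    then have k0: "kk \<noteq> 0" using dinv by auto
    have "inverse kk = kk^2 * dl'"
      using dinv(2) det k0 by (simp add: field_simps power2_eq_square power3_eq_cube)
    then have ikR: "inverse kk \<in> Rg F" using kR dinv(1) by (simp add: Rg_mult Rg_pow)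
    obtain m where m: "m > 0" "kk^m = 1"
      using rou[OF d D0(1) D0(1) k0] RgLL Rg_pow kR ikR by blast
    have "X^m = 1" using X m by (simp add: sc_pow sc_one)
    then show ?thesis using m by blast
  next
    case False
    then have ns: "\<forall>k. X \<noteq> sc k" by blast
    obtain s t where XX: "X * X = sc s * X + sc t" using derog_m3[OF XC XD CD] by blast
    have XXe: "ent (X * X) i j = s * ent X i j + (if i = j then t else 0)" for i j
      unfolding XX by (simp add: ent_add ent_scmult ent_sc)
    have RX2: "ent (X * X) i j \<in> Rg F" for i j by (rule Rg_ent_mult) (use entX in auto)
    obtain Ds where Ds: "Ds > 0" "s \<in> LL d Ds"
    proof -
      from ns_entries[OF ns] show ?thesis
      proof (elim disjE exE conjE)
        fix i j assume ij: "i \<noteq> j" "ent X i j \<noteq> 0"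
        obtain D' where D': "D' > 0" "inverse (ent X i j) \<in> LL d D'"
          using LL_inv[OF RgLL[OF entX[of i j]] D0(1) ij(2)] by blast
        have "s = ent (X * X) i j * inverse (ent X i j)" using XXe[of i j] ij by simp
        then have "s \<in> LL d (D0 * D')" using LL_mult[OF RgLL[OF RX2[of i j]] D'(2)] by simp
        then show ?thesis using that[of "D0 * D'"] D0 D' by simp
      next
        fix i j assume ij: "ent X i i \<noteq> ent X j j"
        then have nz: "ent X i i - ent X j j \<noteq> 0" by simp
        obtain D' where D': "D' > 0" "inverse (ent X i i - ent X j j) \<in> LL d D'"
          using LL_inv[OF RgLL[OF Rg_diff[OF entX[of i i] entX[of j j]]] D0(1) nz] by blast
        have "ent (X * X) i i - ent (X * X) j j = s * (ent X i i - ent X j j)"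
          using XXe[of i i] XXe[of j j] by (simp add: algebra_simps)
        then have "s = (ent (X * X) i i - ent (X * X) j j) * inverse (ent X i i - ent X j j)"
          using nz by (simp add: field_simps)
        then have "s \<in> LL d (D0 * D')"
          using LL_mult[OF RgLL[OF Rg_diff[OF RX2[of i i] RX2[of j j]]] D'(2)] by simp
        then show ?thesis using that[of "D0 * D'"] D0 D' by simp
      qed
    qed
    define l where "l = tr3 X - s"
    define m where "m = 2 * s - tr3 X"
    note es = eig_struct[OF XX ns, folded l_def m_def]
    have tauR: "tr3 X \<in> Rg F" by (rule Rg_tr3) (use entX in auto)
    have ccR: "c13 X \<in> Rg F" by (rule Rg_c13) (use entX in auto)
    have dlR: "det3 X \<in> Rg F" by (rule Rg_det3) (use entX in auto)
    have tauL: "tr3 X \<in> LL d (D0 * Ds)" using LL_mono[OF RgLL[OF tauR]] .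
    have sL: "s \<in> LL d (D0 * Ds)" using LL_mono'[OF Ds(2)] .
    have lL: "l \<in> LL d (D0 * Ds)" unfolding l_def by (rule LL_diff[OF tauL sL])
    have mL: "m \<in> LL d (D0 * Ds)" unfolding m_def mult_2 by (rule LL_diff[OF LL_add[OF sL sL] tauL])
    have DD: "D0 * Ds > 0" using D0 Ds by simp
    have l0: "l \<noteq> 0" and m0: "m \<noteq> 0" using es(3) dinv(2) by auto
    have eql: "l^3 = tr3 X * l^2 - c13 X * l + det3 X"
      unfolding es(3-5) by (simp add: power2_eq_square power3_eq_cube algebra_simps)
    have eqm: "m^3 = tr3 X * m^2 - c13 X * m + det3 X"
      unfolding es(3-5) by (simp add: power2_eq_square power3_eq_cube algebra_simps)
    obtain kl where kl: "kl > 0" "l^kl = 1"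
      using cubic_rou[OF d D0(2) D0(1) lL DD l0 tauR ccR dlR dinv(1) dinv(2) eql] by blast
    obtain km where km: "km > 0" "m^km = 1"
      using cubic_rou[OF d D0(2) D0(1) mL DD m0 tauR ccR dlR dinv(1) dinv(2) eqm] by blast
    have XX': "X * X = sc (l + m) * X + sc (- (l * m))" using XX es(1,2) by simp
    show ?thesis
    proof (cases "l = m")
      case False
      define k where "k = kl * km"
      have k: "k > 0" unfolding k_def using kl km by simp
      have lk: "l^k = 1" unfolding k_def using kl by (simp add: power_mult)
      have mk: "m^k = 1" unfolding k_def using km by (metis mult.commute power_mult power_one)
      have "(l - m) / (l - m) = 1" using False by simp
      then have "X^k = 1" unfolding pow_lin[OF XX' False, of k] lk mk by (simp add: sc_zero sc_one)
      then show ?thesis using k by blast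
    next
      case True
      define N where "N = X - sc l"
      have XN: "X = sc l + N" unfolding N_def by simp
      have Nlin: "N = sc 1 * X + sc (- l)" unfolding N_def by (simp add: sc_one sc_uminus)
      have "N * N = sc (1 * 1 * (l + m) + 1 * (- l) + (- l) * 1) * X + sc (1 * 1 * (- (l * m)) + (- l) * (- l))"
        unfolding Nlin by (rule lin_mult[OF XX'])
      also have "\<dots> = 0" using True by (simp add: sc_zero)
      finally have NN: "N * N = 0" .
      have trN: "tr3 N = 0" unfolding N_def tr3_diff tr3_sc using es(4) True by simp
      have "cmod l ^ kl = 1 ^ kl" using kl by (simp add: norm_power[symmetric])
      then have "cmod l = 1" using power_eq_iff_eq_base[of kl "cmod l" 1] kl by simp
      then show ?thesis using XN NN trN by blast
    qed
  qed
qed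


(* ---- from F4.thy ---- *)


lemma P1: "(sc p + sc q * N) * (sc r + sc u * M) = sc (p * r) + sc (p * u) * M + sc (q * r) * N + sc (q * u) * (N * M)"
  by (simp add: m3_eq9 ent_add ent_mult ent_sc algebra_simps)

lemma scm_l: "(sc p * X) * Y = sc p * (X * Y)" by (simp add: mult.assoc)

lemma MM_expand:
  assumes N1: "X * X = 0" and N2: "Y * Y = 0" and X3: "X * Y * X = 0" and Y3: "Y * X * Y = 0"
  shows "(sc p * Y + sc q * X + X * Y) * (sc p * Y + sc q * X + X * Y) = sc (p * q) * (X * Y + Y * X)"
proof -
  have t1: "(sc p * Y) * (sc p * Y) = 0" using N2 by (metis mult.assoc sc_comm mult_zero_left mult_zero_right)
  have t2: "(sc p * Y) * (sc q * X) = sc (p * q) * (Y * X)" by (metis mult.assoc sc_comm sc_mult)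
  have t3: "(sc p * Y) * (X * Y) = 0" using Y3 by (metis mult.assoc mult_zero_right)
  have t4: "(sc q * X) * (sc p * Y) = sc (p * q) * (X * Y)" by (metis mult.assoc sc_comm sc_mult mult.commute)
  have t5: "(sc q * X) * (sc q * X) = 0" using N1 by (metis mult.assoc sc_comm mult_zero_left mult_zero_right)
  have t6: "(sc q * X) * (X * Y) = 0" using N1 by (metis mult.assoc mult_zero_left mult_zero_right)
  have t7: "(X * Y) * (sc p * Y) = 0" using N2 by (metis mult.assoc sc_comm mult_zero_left mult_zero_right)
  have t8: "(X * Y) * (sc q * X) = 0" using X3 by (metis mult.assoc sc_comm mult_zero_left mult_zero_right)
  have t9: "(X * Y) * (X * Y) = 0" using X3 by (metis mult.assoc mult_zero_left)
  have "(sc p * Y + sc q * X + X * Y) * (sc p * Y + sc q * X + X * Y) =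
     ((sc p * Y) * (sc p * Y) + (sc p * Y) * (sc q * X) + (sc p * Y) * (X * Y))
   + ((sc q * X) * (sc p * Y) + (sc q * X) * (sc q * X) + (sc q * X) * (X * Y))
   + ((X * Y) * (sc p * Y) + (X * Y) * (sc q * X) + (X * Y) * (X * Y))"
    by (simp only: distrib_left distrib_right add.assoc add.commute add.left_commute)
  also have "\<dots> = sc (p * q) * (Y * X) + sc (p * q) * (X * Y)"
    unfolding t1 t2 t3 t4 t5 t6 t7 t8 t9 by simp
  also have "\<dots> = sc (p * q) * (X * Y + Y * X)" by (simp add: distrib_left add.commute)
  finally show ?thesis .
qed

lemma comb_pure: "sc p1 + sc p2 * X + sc p3 * X + sc p4 * 0 = sc p1 + sc (p2 + p3) * X"
  by (simp add: sc_add distrib_right add.assoc)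

lemma concat_rep1: "concat (replicate k [x]) = replicate k x"
  by (induction k) auto

definition Em :: "3 \<Rightarrow> 3 \<Rightarrow> m3" where "Em j i = abs3 (\<chi> k l. if k = j \<and> l = i then 1 else 0)"

lemma ent_Em: "ent (Em j i) k l = (if k = j \<and> l = i then 1 else 0)"
  by (simp add: Em_def ent_def abs3_inverse)

lemma tr3_Em: "tr3 (N * Em j i) = ent N i j"
  using exhaust_3[of i] exhaust_3[of j] by (auto simp: tr3_def ent_mult ent_Em)

lemma final3:
  fixes f :: "sig2 list \<Rightarrow> m3"
  assumes hom: "\<And>u v. f (u @ v) = f u * f v" and f0: "f [] = 1" and inj: "inj f"
    and per: "\<And>u. u \<noteq> [] \<Longrightarrow> (\<exists>k>0. (f u)^k = 1) \<or> (\<exists>l N. f u = sc l + N \<and> N * N = 0 \<and> tr3 N = 0 \<and> cmod l = 1)"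
  shows False
proof -
  have fpow: "f (concat (replicate k u)) = (f u)^k" for k u
    by (induction k) (simp_all add: f0 hom)
  have good: "\<exists>l N. f u = sc l + N \<and> N * N = 0 \<and> tr3 N = 0 \<and> cmod l = 1" if "u \<noteq> []" for u
  proof -
    have "\<not> (\<exists>k>0. (f u)^k = 1)"
    proof
      assume "\<exists>k>0. (f u)^k = 1"
      then obtain k where k: "k > 0" "(f u)^k = 1" by blast
      then have "f (concat (replicate k u)) = f []" using fpow f0 by simp
      then have "concat (replicate k u) = []" using inj by (simp add: inj_eq)
      then have "length (concat (replicate k u)) = 0" by simp
      then show False using k that by (simp add: length_concat sum_list_replicate)
    qed
    then show ?thesis using per[OF that] by blast
  qed
  obtain al N1 where A: "f [a] = sc al + N1" "N1 * N1 = 0" "tr3 N1 = 0" "cmod al = 1" using good[of "[a]"] by auto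
  obtain be N2 where B: "f [b] = sc be + N2" "N2 * N2 = 0" "tr3 N2 = 0" "cmod be = 1" using good[of "[b]"] by auto
  define T where "T = tr3 (N1 * N2)"
  have Al: "f [a] = sc al + sc 1 * N1" using A by (simp add: sc_one)
  have Bl: "f [b] = sc be + sc 1 * N2" using B by (simp add: sc_one)
  have Apow: "(f [a])^(Suc k) = sc (al^Suc k) + sc (of_nat (Suc k) * al^k) * N1" for k
  proof (induction k)
    case 0 then show ?case using Al by simp
  next
    case (Suc k)
    have "(f [a])^(Suc (Suc k)) = (sc al + sc 1 * N1) * (sc (al^Suc k) + sc (of_nat (Suc k) * al^k) * N1)"
      using Suc Al by simp
    also have "\<dots> = sc (al * al^Suc k) + sc (al * (of_nat (Suc k) * al^k)) * N1 + sc (1 * al^Suc k) * N1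
        + sc (1 * (of_nat (Suc k) * al^k)) * (N1 * N1)" by (rule P1)
    also have "\<dots> = sc (al * al^Suc k) + sc (al * (of_nat (Suc k) * al^k) + 1 * al^Suc k) * N1"
      unfolding A(2) by (rule comb_pure)
    also have "al * al^Suc k = al^Suc (Suc k)" by simp
    also have "al * (of_nat (Suc k) * al^k) + 1 * al^Suc k = of_nat (Suc (Suc k)) * al^Suc k"
      by (simp add: algebra_simps)
    finally show ?case .
  qed
  have trAB: "tr3 ((f [a])^(Suc k) * f [b]) = 3 * al^Suc k * be + of_nat (Suc k) * al^k * T" for k
  proof -
    have "(f [a])^(Suc k) * f [b] = sc (al^Suc k * be) + sc (al^Suc k * 1) * N2 + sc (of_nat (Suc k) * al^k * be) * N1
        + sc (of_nat (Suc k) * al^k * 1) * (N1 * N2)"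
      unfolding Apow Bl by (rule P1)
    then show ?thesis using A(3) B(3) unfolding T_def by (simp add: tr3_add tr3_sc tr3_scmult)
  qed
  have bound: "of_nat (Suc k) * cmod T \<le> 6" for k
  proof -
    have "f (replicate (Suc k) a @ [b]) = f (replicate (Suc k) a) * f [b]" by (rule hom)
    also have "f (replicate (Suc k) a) = (f [a])^(Suc k)" using fpow[of "Suc k" "[a]"] by (simp only: concat_rep1)
    finally have "f (replicate (Suc k) a @ [b]) = (f [a])^(Suc k) * f [b]" .
    moreover obtain g M where g: "f (replicate (Suc k) a @ [b]) = sc g + M" "tr3 M = 0" "cmod g = 1"
      using good[of "replicate (Suc k) a @ [b]"] by auto
    ultimately have "3 * g = 3 * al^Suc k * be + of_nat (Suc k) * al^k * T"
      using trAB[of k] by (simp add: tr3_add tr3_sc)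
    then have "of_nat (Suc k) * al^k * T = 3 * g - 3 * al^Suc k * be" by (simp add: algebra_simps)
    then have "cmod (of_nat (Suc k) * al^k * T) = cmod (3 * g - 3 * al^Suc k * be)" by simp
    also have "\<dots> \<le> cmod (3 * g) + cmod (3 * al^Suc k * be)" by (rule norm_triangle_ineq4)
    also have "\<dots> = 6" using g A(4) B(4) by (simp add: norm_mult norm_power)
    moreover have "cmod (1 + complex_of_nat k) = 1 + real k" by (metis norm_of_nat of_nat_Suc)
    ultimately show ?thesis using A(4) by (simp add: norm_mult norm_power)
  qed
  have T0: "T = 0"
  proof (rule ccontr)
    assume "T \<noteq> 0"
    then have "cmod T > 0" by simp
    then obtain n :: nat where n: "6 < real n * cmod T" using reals_Archimedean3 by blast
    then obtain k where "n = Suc k" by (cases n) auto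
    then show False using bound[of k] n by simp
  qed
  have AB: "f [a, b] = sc (al * be) + sc al * N2 + sc be * N1 + N1 * N2"
  proof -
    have "f [a, b] = f [a] * f [b]" using hom[of "[a]" "[b]"] by simp
    also have "\<dots> = sc (al * be) + sc (al * 1) * N2 + sc (1 * be) * N1 + sc (1 * 1) * (N1 * N2)"
      unfolding Al Bl by (rule P1)
    finally show ?thesis by (simp add: sc_one)
  qed
  have BA: "f [b, a] = sc (al * be) + sc al * N2 + sc be * N1 + N2 * N1"
  proof -
    have "f [b, a] = f [b] * f [a]" using hom[of "[b]" "[a]"] by simp
    also have "\<dots> = sc (be * al) + sc (be * 1) * N1 + sc (1 * al) * N2 + sc (1 * 1) * (N2 * N1)"
      unfolding Al Bl by (rule P1)
    finally show ?thesis by (simp add: sc_one mult.commute add_ac)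
  qed
  obtain g M where g: "f [a, b] = sc g + M" "M * M = 0" "tr3 M = 0" using good[of "[a,b]"] by auto
  have "3 * g = 3 * (al * be)"
  proof -
    have "tr3 (f [a, b]) = 3 * g" using g by (simp add: tr3_add tr3_sc)
    moreover have "tr3 (f [a, b]) = 3 * (al * be)"
      unfolding AB using A(3) B(3) T0 unfolding T_def by (simp add: tr3_add tr3_sc tr3_scmult)
    ultimately show ?thesis by simp
  qed
  then have gab: "g = al * be" by simp
  have Mdef: "M = sc al * N2 + sc be * N1 + N1 * N2" using g(1) AB gab by (simp add: add.assoc)
  have X3: "N1 * N2 * N1 = 0" using nyn[OF A(2), of N2] T0 unfolding T_def by (simp add: sc_zero)
  have Y3: "N2 * N1 * N2 = 0" using nyn[OF B(2), of N1] T0 tr3_comm[of N1 N2] unfolding T_def by (simp add: sc_zero)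
  have "sc (al * be) * (N1 * N2 + N2 * N1) = 0"
    using MM_expand[OF A(2) B(2) X3 Y3, of al be] g(2) Mdef by simp
  then have "sc (inverse (al * be)) * (sc (al * be) * (N1 * N2 + N2 * N1)) = 0" by simp
  moreover have "al * be \<noteq> 0" using A(4) B(4) by auto
  ultimately have anti: "N1 * N2 + N2 * N1 = 0"
  proof -
    assume h: "sc (inverse (al * be)) * (sc (al * be) * (N1 * N2 + N2 * N1)) = 0" "al * be \<noteq> 0"
    have "inverse (al * be) * (al * be) = 1" using h(2) by (rule left_inverse)
    then have "sc (inverse (al * be)) * (sc (al * be) * (N1 * N2 + N2 * N1)) = N1 * N2 + N2 * N1"
      by (simp only: sc_sc sc_one mult_1)
    then show ?thesis using h(1) by simp
  qed
  have key: "sc (tr3 (N1 * (N2 * Z))) * N1 = sc (tr3 (N1 * Z)) * (N1 * N2)" for Z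
  proof -
    have "sc (tr3 (N1 * (N2 * Z))) * N1 = N1 * (N2 * Z) * N1" using nyn[OF A(2)] by simp
    also have "\<dots> = - (N2 * (N1 * Z * N1))"
    proof -
      have "N1 * N2 = - (N2 * N1)" using anti by (simp add: eq_neg_iff_add_eq_0)
      then show ?thesis by (simp add: mult.assoc[symmetric])
    qed
    also have "\<dots> = - (N2 * (sc (tr3 (N1 * Z)) * N1))" using nyn[OF A(2)] by simp
    also have "\<dots> = sc (tr3 (N1 * Z)) * (- (N2 * N1))" by (simp add: sc_comm2)
    also have "- (N2 * N1) = N1 * N2" using anti by (metis eq_neg_iff_add_eq_0)
    finally show ?thesis .
  qed
  have comm: "N1 * N2 = 0"
  proof (cases "N1 = 0")
    case True then show ?thesis by simp
  next
    case False
    then obtain i j where ij: "ent N1 i j \<noteq> 0" by (auto simp: m3_eq ent_zero)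
    have k1: "sc (tr3 (N1 * (N2 * Em j i))) * N1 = sc (ent N1 i j) * (N1 * N2)" using key[of "Em j i"] by (simp add: tr3_Em)
    define kk where "kk = inverse (ent N1 i j) * tr3 (N1 * (N2 * Em j i))"
    have "sc (inverse (ent N1 i j)) * (sc (tr3 (N1 * (N2 * Em j i))) * N1) = sc (inverse (ent N1 i j)) * (sc (ent N1 i j) * (N1 * N2))"
      using k1 by simp
    then have P: "N1 * N2 = sc kk * N1" using ij unfolding kk_def by (simp add: sc_sc sc_one)
    have "0 = N1 * (N2 * N2)" using B(2) by simp
    also have "\<dots> = (N1 * N2) * N2" by (simp only: mult.assoc)
    also have "\<dots> = (sc kk * N1) * N2" by (simp only: P)
    also have "\<dots> = sc kk * (N1 * N2)" by (simp only: mult.assoc)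
    also have "\<dots> = sc kk * (sc kk * N1)" by (simp only: P)
    also have "\<dots> = sc (kk * kk) * N1" by (simp add: sc_sc)
    finally have "ent (sc (kk * kk) * N1) i j = 0" by (simp add: ent_zero)
    then have "kk * kk = 0" using ij by (simp add: ent_scmult)
    then have "kk = 0" by simp
    then show ?thesis using P by (simp add: sc_zero)
  qed
  then have "N2 * N1 = 0" using anti by simp
  then have "f [a, b] = f [b, a]" unfolding AB BA using comm by simp
  then show False using inj by (simp add: inj_eq)
qed


(* ---- from W.thy ---- *)


lemma fg_reduced_tl: "fg_reduced (l # w) \<Longrightarrow> fg_reduced w"
  by (cases w) auto

lemma fg_reduce_Cons: "fg_reduce (l # w) = fg_push l (fg_reduce w)"
  by (simp add: fg_reduce_def)

lemma fg_reduce_reduced: "fg_reduced w \<Longrightarrow> fg_reduce w = w"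
proof (induction w)
  case Nil then show ?case by (simp add: fg_reduce_def)
next
  case (Cons l w)
  then have IH: "fg_reduce w = w" using fg_reduced_tl by blast
  show ?case
  proof (cases w)
    case Nil then show ?thesis by (simp add: fg_reduce_def)
  next
    case (Cons m w')
    then show ?thesis using IH Cons.prems by (simp add: fg_reduce_Cons)
  qed
qed

definition pos :: "'s list \<Rightarrow> (bool \<times> 's) list" where "pos u = map (Pair True) u"
definition negw :: "'s list \<Rightarrow> (bool \<times> 's) list" where "negw u = map (Pair False) (rev u)"

lemma pos_reduced: "fg_reduced (pos u)"
proof (induction u)
  case Nil then show ?case by (simp add: pos_def)
next
  case (Cons x u) then show ?case by (cases u) (auto simp: pos_def)
qed

lemma negw_reduced_aux: "fg_reduced (map (Pair False) u)"
proof (induction u)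
  case Nil then show ?case by simp
next
  case (Cons x u) then show ?case by (cases u) auto
qed

lemma negw_reduced: "fg_reduced (negw u)"
  unfolding negw_def by (rule negw_reduced_aux)

lemma pos_append: "pos (u @ v) = pos u @ pos v" by (simp add: pos_def)

lemma fg_mult_pos: "fg_mult (pos u) (pos v) = pos (u @ v)"
  unfolding fg_mult_def pos_append[symmetric] by (rule fg_reduce_reduced[OF pos_reduced])

lemma fg_mult_Nil: "fg_mult [] [] = []" by (simp add: fg_mult_def fg_reduce_def)

lemma fg_mult_Nil_r: "fg_reduced w \<Longrightarrow> fg_mult w [] = w"
  by (simp add: fg_mult_def fg_reduce_reduced)
lemma fg_mult_Nil_l: "fg_reduced w \<Longrightarrow> fg_mult [] w = w"
  by (simp add: fg_mult_def fg_reduce_reduced)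

lemma fg_mult_pos_negw: "fg_mult (pos u) (negw u) = []"
proof -
  have "foldr fg_push (pos u) (negw u) = []"
  proof (induction u rule: rev_induct)
    case Nil then show ?case by (simp add: pos_def negw_def)
  next
    case (snoc x u)
    have "foldr fg_push (pos (u @ [x])) (negw (u @ [x])) = foldr fg_push (pos u) (fg_push (True, x) ((False, x) # negw u))"
      by (simp add: pos_def negw_def)
    also have "\<dots> = foldr fg_push (pos u) (negw u)" by simp
    finally show ?case using snoc by simp
  qed
  then show ?thesis
    unfolding fg_mult_def fg_reduce_def foldr_append
    using fg_reduce_reduced[OF negw_reduced, of u] by (simp add: fg_reduce_def)
qed

lemma fg_carrier_pos: "pos u \<in> fg_carrier" by (simp add: fg_carrier_def pos_reduced)
lemma fg_carrier_negw: "negw u \<in> fg_carrier" by (simp add: fg_carrier_def negw_reduced)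
lemma fg_carrier_Nil: "[] \<in> fg_carrier" by (simp add: fg_carrier_def)

lemma pos_inj: "pos u = pos v \<Longrightarrow> u = v"
  unfolding pos_def by (simp add: inj_map_eq_map inj_on_def)

lemma pos_Nil: "pos [] = []" by (simp add: pos_def)
lemma pos_replicate: "pos (replicate n x) = replicate n (True, x)" by (simp add: pos_def)


(* ---- from M2.thy ---- *)


lemma mm2: "((A::complex^2^2) ** B)$i$j = A$i$1 * B$1$j + A$i$2 * B$2$j"
  by (simp add: matrix_matrix_mult_def sum_2)

lemma mat2_nth: "(mat k :: complex^2^2)$i$j = (if i = j then k else 0)"
  by (simp add: mat_def)

lemma cent2:
  fixes X A B :: "complex^2^2"
  assumes XA: "X ** A = A ** X" and XB: "X ** B = B ** X" and AB: "A ** B \<noteq> B ** A"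
  shows "\<exists>l. X = mat l"
proof (rule ccontr)
  assume ns: "\<not> ?thesis"
  define p where "p = X$1$1"
  define q where "q = X$1$2"
  define r where "r = X$2$1"
  define s where "s = X$2$2"
  have nz: "q \<noteq> 0 \<or> r \<noteq> 0 \<or> p - s \<noteq> 0"
  proof (rule ccontr)
    assume "\<not> ?thesis"
    then have "X = mat p" unfolding p_def q_def r_def s_def by (auto simp: vec_eq_iff forall_2 mat2_nth)
    then show False using ns by blast
  qed
  have ea: "(X ** A)$i$j = (A ** X)$i$j" for i j using XA by simp
  have eb: "(X ** B)$i$j = (B ** X)$i$j" for i j using XB by simp
  define a1 where "a1 = A$1$1" define a2 where "a2 = A$1$2" define a3 where "a3 = A$2$1" define a4 where "a4 = A$2$2"
  define b1 where "b1 = B$1$1" define b2 where "b2 = B$1$2" define b3 where "b3 = B$2$1" define b4 where "b4 = B$2$2"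
  have HA: "q * a3 = r * a2" "p * a2 + q * a4 = a1 * q + a2 * s" "r * a1 + s * a3 = a3 * p + a4 * r"
    using ea[of 1 1] ea[of 1 2] ea[of 2 1]
    unfolding mm2 p_def q_def r_def s_def a1_def a2_def a3_def a4_def by (simp_all add: algebra_simps)
  have HB: "q * b3 = r * b2" "p * b2 + q * b4 = b1 * q + b2 * s" "r * b1 + s * b3 = b3 * p + b4 * r"
    using eb[of 1 1] eb[of 1 2] eb[of 2 1]
    unfolding mm2 p_def q_def r_def s_def b1_def b2_def b3_def b4_def by (simp_all add: algebra_simps)
  define c11 where "c11 = a2 * b3 - b2 * a3"
  define c12 where "c12 = (a1 - a4) * b2 - (b1 - b4) * a2"
  define c21 where "c21 = a3 * (b1 - b4) - b3 * (a1 - a4)"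
  have Z: "e * e * c11 = 0 \<and> e * e * c12 = 0 \<and> e * e * c21 = 0" if "e = q \<or> e = r \<or> e = p - s" for e
    using that HA HB unfolding c11_def c12_def c21_def by (elim disjE; intro conjI; algebra)
  obtain e where e: "e \<noteq> 0" "e = q \<or> e = r \<or> e = p - s" using nz by blast
  have c0: "c11 = 0" "c12 = 0" "c21 = 0" using Z[OF e(2)] e(1) by auto
  have "A ** B = B ** A"
    using c0 unfolding c11_def c12_def c21_def a1_def a2_def a3_def a4_def b1_def b2_def b3_def b4_def
    by (simp add: vec_eq_iff forall_2 mm2 algebra_simps)
  then show False using AB by simp
qed

lemma mat2_mult: "(mat x :: complex^2^2) ** mat y = mat (x * y)"
  by (simp add: vec_eq_iff forall_2 mm2 mat2_nth)

lemma core12: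
  fixes A B X Y E :: "complex^2^2" and P :: "nat \<Rightarrow> complex^2^2"
  assumes d: "d > 0" and Xi: "\<And>i j. X$i$j \<in> O_d d" and Yi: "\<And>i j. Y$i$j \<in> O_d d"
    and XA: "X ** A = A ** X" and XB: "X ** B = B ** X" and YA: "Y ** A = A ** Y" and YB: "Y ** B = B ** Y"
    and AB: "A ** B \<noteq> B ** A" and XY: "X ** Y = E" and AE: "A ** E = A" and BE: "B ** E = B"
    and EE: "E ** E = E" and AnB: "A \<noteq> B"
    and P1: "P 1 = X" and PS: "\<And>n. P (Suc (Suc n)) = X ** P (Suc n)" and PE: "\<And>n. P (Suc n) \<noteq> E"
  shows False
proof -
  obtain l where l: "X = mat l" using cent2[OF XA XB AB] by blast
  obtain m where m: "Y = mat m" using cent2[OF YA YB AB] by blast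
  have E: "E = mat (l * m)" using XY l m mat2_mult by simp
  have lm0: "l * m \<noteq> 0"
  proof
    assume "l * m = 0"
    then have "E = 0" using E by (simp add: vec_eq_iff mat2_nth)
    then have "A = 0" "B = 0" using AE BE by simp_all
    then show False using AnB by simp
  qed
  have "mat (l * m * (l * m)) = (mat (l * m) :: complex^2^2)" using EE E mat2_mult by metis
  then have "l * m * (l * m) = l * m" by (metis mat2_nth)
  then have lm1: "l * m = 1" using lm0 by (metis mult_cancel_right2 mult.commute)
  have lO: "l \<in> O_d d" using Xi[of 1 1] l by (simp add: mat2_nth)
  have mO: "m \<in> O_d d" using Yi[of 1 1] m by (simp add: mat2_nth)
  obtain D1 where D1: "D1 > 0" "\<forall>k. l^k \<in> LL d D1" using algint_BDP[OF lO] by blast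
  obtain D2 where D2: "D2 > 0" "\<forall>k. m^k \<in> LL d D2" using algint_BDP[OF mO] by blast
  have im: "inverse l = m" using lm1 by (metis inverse_unique)
  have l0: "l \<noteq> 0" using lm0 by auto
  obtain k where k: "k > 0" "l^k = 1" using rou[OF d D1(1) D2(1) l0 D1(2)] D2(2) im by auto
  have Pp: "P (Suc n) = mat (l ^ Suc n)" for n
  proof (induction n)
    case 0 show ?case using P1 l by simp
  next
    case (Suc n) then show ?case using PS[of n] l by (simp add: mat2_mult)
  qed
  obtain n where n: "k = Suc n" using k by (cases k) auto
  have "P (Suc n) = mat 1" using Pp[of n] k n by simp
  moreover have "E = mat 1" using E lm1 by simp
  ultimately show False using PE by simp
qed


(* ---- from P.thy ---- *)


lemma emb_unfold:
  assumes "is_embedding M mul T tmul \<phi>"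
  shows "inj_on \<phi> M" "\<And>x. x \<in> M \<Longrightarrow> \<phi> x \<in> T" "\<And>u v. u \<in> M \<Longrightarrow> v \<in> M \<Longrightarrow> \<phi> (mul u v) = tmul (\<phi> u) (\<phi> v)"
  using assms unfolding is_embedding_def by auto

lemma pm: "prod_mult m1 m2 (x1, y1) (x2, y2) = (m1 x1 x2, m2 y1 y2)" by (simp add: prod_mult_def)

lemma red_simps: "fg_reduced []" "fg_reduced [x]" by simp_all

lemma part1:
  assumes d: "d > 0"
  shows "\<not> (\<exists>\<phi> :: sig2 list \<times> (bool \<times> sig1) list \<Rightarrow> complex^2^2.
        is_embedding (sg_carrier \<times> fg_carrier) (prod_mult sg_mult fg_mult) (int_mats d) (**) \<phi>)"
proof
  assume "\<exists>\<phi> :: sig2 list \<times> (bool \<times> sig1) list \<Rightarrow> complex^2^2.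
        is_embedding (sg_carrier \<times> fg_carrier) (prod_mult sg_mult fg_mult) (int_mats d) (**) \<phi>"
  then obtain \<phi> :: "sig2 list \<times> (bool \<times> sig1) list \<Rightarrow> complex^2^2" where
    emb: "is_embedding (sg_carrier \<times> fg_carrier) (prod_mult sg_mult fg_mult) (int_mats d) (**) \<phi>" by blast
  note E = emb_unfold[OF emb]
  have mem: "fg_reduced v \<Longrightarrow> (u, v) \<in> sg_carrier \<times> fg_carrier" for u v by (simp add: sg_carrier_def fg_carrier_def)
  have hom: "fg_reduced v1 \<Longrightarrow> fg_reduced v2 \<Longrightarrow> \<phi> (u1 @ u2, fg_mult v1 v2) = \<phi> (u1, v1) ** \<phi> (u2, v2)" for u1 v1 u2 v2
    using E(3)[OF mem mem] by (simp add: pm sg_mult_def)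
  have ent: "fg_reduced v \<Longrightarrow> \<phi> (u, v) $ i $ j \<in> O_d d" for u v i j
    using E(2)[OF mem] by (simp add: int_mats_def)
  have inj: "fg_reduced v1 \<Longrightarrow> fg_reduced v2 \<Longrightarrow> \<phi> (u1, v1) = \<phi> (u2, v2) \<Longrightarrow> u1 = u2 \<and> v1 = v2" for u1 v1 u2 v2
    using E(1) mem unfolding inj_on_def by blast
  define tc where "tc = (True, c)"
  define fc where "fc = (False, c)"
  have r: "fg_reduced []" "fg_reduced [tc]" "fg_reduced [fc]" by simp_all
  have m1: "fg_mult [] [tc] = [tc]" "fg_mult [tc] [] = [tc]" "fg_mult [] [fc] = [fc]" "fg_mult [fc] [] = [fc]"
    "fg_mult [tc] [fc] = []" "fg_mult ([]::(bool \<times> sig1) list) [] = []"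
    by (simp_all add: fg_mult_def fg_reduce_def tc_def fc_def)
  define A where "A = \<phi> ([a], [])"
  define B where "B = \<phi> ([b], [])"
  define X where "X = \<phi> ([], [tc])"
  define Y where "Y = \<phi> ([], [fc])"
  define EE where "EE = \<phi> ([], [])"
  define P where "P n = \<phi> ([], replicate n tc)" for n
  have XA: "X ** A = A ** X" using hom[OF r(2) r(1), of "[]" "[a]"] hom[OF r(1) r(2), of "[a]" "[]"]
    unfolding X_def A_def m1 by simp
  have XB: "X ** B = B ** X" using hom[OF r(2) r(1), of "[]" "[b]"] hom[OF r(1) r(2), of "[b]" "[]"]
    unfolding X_def B_def m1 by simp
  have YA: "Y ** A = A ** Y" using hom[OF r(3) r(1), of "[]" "[a]"] hom[OF r(1) r(3), of "[a]" "[]"]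
    unfolding Y_def A_def m1 by simp
  have YB: "Y ** B = B ** Y" using hom[OF r(3) r(1), of "[]" "[b]"] hom[OF r(1) r(3), of "[b]" "[]"]
    unfolding Y_def B_def m1 by simp
  have AB: "A ** B \<noteq> B ** A"
  proof
    assume "A ** B = B ** A"
    then have "\<phi> ([a, b], []) = \<phi> ([b, a], [])"
      using hom[OF r(1) r(1), of "[a]" "[b]"] hom[OF r(1) r(1), of "[b]" "[a]"] unfolding A_def B_def m1 by simp
    then have "[a, b] = [b, a]" using inj[OF r(1) r(1)] by blast
    then show False by simp
  qed
  have XY: "X ** Y = EE" using hom[OF r(2) r(3), of "[]" "[]"] unfolding X_def Y_def EE_def m1 by simp
  have AE: "A ** EE = A" using hom[OF r(1) r(1), of "[a]" "[]"] unfolding A_def EE_def m1 by simp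
  have BE: "B ** EE = B" using hom[OF r(1) r(1), of "[b]" "[]"] unfolding B_def EE_def m1 by simp
  have EEE: "EE ** EE = EE" using hom[OF r(1) r(1), of "[]" "[]"] unfolding EE_def m1 by simp
  have AnB: "A \<noteq> B" using inj[OF r(1) r(1), of "[a]" "[b]"] unfolding A_def B_def by auto
  have P1: "P 1 = X" unfolding P_def X_def by simp
  have rep: "replicate n tc = pos (replicate n c)" for n by (simp add: pos_replicate tc_def)
  have PS: "P (Suc (Suc n)) = X ** P (Suc n)" for n
  proof -
    have "fg_mult [tc] (replicate (Suc n) tc) = replicate (Suc (Suc n)) tc"
      using fg_mult_pos[of "[c]" "replicate (Suc n) c"] unfolding rep by (simp add: pos_def tc_def)
    then show ?thesis using hom[OF r(2), of "replicate (Suc n) tc" "[]" "[]"] pos_reduced[of "replicate (Suc n) c"]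
      unfolding P_def X_def rep by simp
  qed
  have PE: "P (Suc n) \<noteq> EE" for n
    using inj[OF _ r(1), of "replicate (Suc n) tc" "[]" "[]"] pos_reduced[of "replicate (Suc n) c"]
    unfolding P_def EE_def rep by (auto simp: pos_def)
  show False
    by (rule core12[OF d _ _ XA XB YA YB AB XY AE BE EEE AnB P1 PS PE])
       (auto simp: X_def Y_def intro!: ent r)
qed


lemma part2:
  assumes d: "d > 0"
  shows "\<not> (\<exists>\<phi> :: (bool \<times> sig2) list \<times> (bool \<times> sig1) list \<Rightarrow> complex^2^2.
        is_embedding (fg_carrier \<times> fg_carrier) (prod_mult fg_mult fg_mult) (int_mats d) (**) \<phi>)"
proof
  assume "\<exists>\<phi> :: (bool \<times> sig2) list \<times> (bool \<times> sig1) list \<Rightarrow> complex^2^2.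
        is_embedding (fg_carrier \<times> fg_carrier) (prod_mult fg_mult fg_mult) (int_mats d) (**) \<phi>"
  then obtain \<phi> :: "(bool \<times> sig2) list \<times> (bool \<times> sig1) list \<Rightarrow> complex^2^2" where
    emb: "is_embedding (fg_carrier \<times> fg_carrier) (prod_mult fg_mult fg_mult) (int_mats d) (**) \<phi>" by blast
  note E = emb_unfold[OF emb]
  have mem: "fg_reduced u \<Longrightarrow> fg_reduced v \<Longrightarrow> (u, v) \<in> fg_carrier \<times> fg_carrier" for u v by (simp add: fg_carrier_def)
  have hom: "fg_reduced u1 \<Longrightarrow> fg_reduced v1 \<Longrightarrow> fg_reduced u2 \<Longrightarrow> fg_reduced v2 \<Longrightarrow>
      \<phi> (fg_mult u1 u2, fg_mult v1 v2) = \<phi> (u1, v1) ** \<phi> (u2, v2)" for u1 v1 u2 v2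
    using E(3)[OF mem mem] by (simp add: pm)
  have ent: "fg_reduced u \<Longrightarrow> fg_reduced v \<Longrightarrow> \<phi> (u, v) $ i $ j \<in> O_d d" for u v i j
    using E(2)[OF mem] by (simp add: int_mats_def)
  have inj: "fg_reduced u1 \<Longrightarrow> fg_reduced v1 \<Longrightarrow> fg_reduced u2 \<Longrightarrow> fg_reduced v2 \<Longrightarrow>
      \<phi> (u1, v1) = \<phi> (u2, v2) \<Longrightarrow> u1 = u2 \<and> v1 = v2" for u1 v1 u2 v2
    using E(1) mem unfolding inj_on_def by blast
  define tc where "tc = (True, c)"
  define fc where "fc = (False, c)"
  define pa where "pa = pos [a]"
  define pb where "pb = pos [b]"
  have r: "fg_reduced []" "fg_reduced [tc]" "fg_reduced [fc]" "fg_reduced pa" "fg_reduced pb"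
    by (simp_all add: pa_def pb_def pos_reduced)
  have m1: "fg_mult [] [tc] = [tc]" "fg_mult [tc] [] = [tc]" "fg_mult [] [fc] = [fc]" "fg_mult [fc] [] = [fc]"
    "fg_mult [tc] [fc] = []" "fg_mult ([]::(bool \<times> sig1) list) [] = []"
    by (simp_all add: fg_mult_def fg_reduce_def tc_def fc_def)
  have m2: "fg_mult [] pa = pa" "fg_mult pa [] = pa" "fg_mult [] pb = pb" "fg_mult pb [] = pb"
    "fg_mult ([]::(bool \<times> sig2) list) [] = []"
    using r by (simp_all add: fg_mult_Nil_l fg_mult_Nil_r fg_mult_Nil)
  define A where "A = \<phi> (pa, [])"
  define B where "B = \<phi> (pb, [])"
  define X where "X = \<phi> ([], [tc])"
  define Y where "Y = \<phi> ([], [fc])"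
  define EE where "EE = \<phi> ([], [])"
  define P where "P n = \<phi> ([], replicate n tc)" for n
  have XA: "X ** A = A ** X" using hom[OF r(1) r(2) r(4) r(1)] hom[OF r(4) r(1) r(1) r(2)]
    unfolding X_def A_def m1 m2 by simp
  have XB: "X ** B = B ** X" using hom[OF r(1) r(2) r(5) r(1)] hom[OF r(5) r(1) r(1) r(2)]
    unfolding X_def B_def m1 m2 by simp
  have YA: "Y ** A = A ** Y" using hom[OF r(1) r(3) r(4) r(1)] hom[OF r(4) r(1) r(1) r(3)]
    unfolding Y_def A_def m1 m2 by simp
  have YB: "Y ** B = B ** Y" using hom[OF r(1) r(3) r(5) r(1)] hom[OF r(5) r(1) r(1) r(3)]
    unfolding Y_def B_def m1 m2 by simp
  have AB: "A ** B \<noteq> B ** A"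
  proof
    assume "A ** B = B ** A"
    then have "\<phi> (pos [a, b], []) = \<phi> (pos [b, a], [])"
      using hom[OF r(4) r(1) r(5) r(1)] hom[OF r(5) r(1) r(4) r(1)] unfolding A_def B_def m1
      by (simp add: pa_def pb_def fg_mult_pos)
    then have "pos [a, b] = pos [b, a]" using inj[OF pos_reduced r(1) pos_reduced r(1)] by blast
    then show False by (simp add: pos_def)
  qed
  have XY: "X ** Y = EE" using hom[OF r(1) r(2) r(1) r(3)] unfolding X_def Y_def EE_def m1 m2 by simp
  have AE: "A ** EE = A" using hom[OF r(4) r(1) r(1) r(1)] unfolding A_def EE_def m1 m2 by simp
  have BE: "B ** EE = B" using hom[OF r(5) r(1) r(1) r(1)] unfolding B_def EE_def m1 m2 by simp
  have EEE: "EE ** EE = EE" using hom[OF r(1) r(1) r(1) r(1)] unfolding EE_def m1 m2 by simp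
  have AnB: "A \<noteq> B" using inj[OF r(4) r(1) r(5) r(1)] unfolding A_def B_def by (auto simp: pa_def pb_def pos_def)
  have P1: "P 1 = X" unfolding P_def X_def by simp
  have rep: "replicate n tc = pos (replicate n c)" for n by (simp add: pos_replicate tc_def)
  have PS: "P (Suc (Suc n)) = X ** P (Suc n)" for n
  proof -
    have "fg_mult [tc] (replicate (Suc n) tc) = replicate (Suc (Suc n)) tc"
      using fg_mult_pos[of "[c]" "replicate (Suc n) c"] unfolding rep by (simp add: pos_def tc_def)
    then show ?thesis using hom[OF r(1) r(2) r(1), of "replicate (Suc n) tc"] pos_reduced[of "replicate (Suc n) c"]
      unfolding P_def X_def rep m2 by simp
  qed
  have PE: "P (Suc n) \<noteq> EE" for n
    using inj[OF r(1) _ r(1) r(1), of "replicate (Suc n) tc"] pos_reduced[of "replicate (Suc n) c"]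
    unfolding P_def EE_def rep by (auto simp: pos_def)
  show False
    by (rule core12[OF d _ _ XA XB YA YB AB XY AE BE EEE AnB P1 PS PE])
       (auto simp: X_def Y_def intro!: ent r)
qed

lemma det2_mat: "det (mat x :: complex^2^2) = x * x"
  by (simp add: det_2 mat2_nth)

lemma part3:
  shows "\<not> (\<exists>\<phi> :: (bool \<times> sig2) list \<times> sig1 list \<Rightarrow> complex^2^2.
        is_embedding (fg_carrier \<times> sg_carrier) (prod_mult fg_mult sg_mult) (SL_mats d) (**) \<phi>)"
proof
  assume "\<exists>\<phi> :: (bool \<times> sig2) list \<times> sig1 list \<Rightarrow> complex^2^2.
        is_embedding (fg_carrier \<times> sg_carrier) (prod_mult fg_mult sg_mult) (SL_mats d) (**) \<phi>"
  then obtain \<phi> :: "(bool \<times> sig2) list \<times> sig1 list \<Rightarrow> complex^2^2" where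
    emb: "is_embedding (fg_carrier \<times> sg_carrier) (prod_mult fg_mult sg_mult) (SL_mats d) (**) \<phi>" by blast
  note E = emb_unfold[OF emb]
  have mem: "fg_reduced u \<Longrightarrow> (u, v) \<in> fg_carrier \<times> sg_carrier" for u v by (simp add: fg_carrier_def sg_carrier_def)
  have hom: "fg_reduced u1 \<Longrightarrow> fg_reduced u2 \<Longrightarrow>
      \<phi> (fg_mult u1 u2, v1 @ v2) = \<phi> (u1, v1) ** \<phi> (u2, v2)" for u1 v1 u2 v2
    using E(3)[OF mem mem] by (simp add: pm sg_mult_def)
  have dt: "fg_reduced u \<Longrightarrow> det (\<phi> (u, v)) = 1" for u v
    using E(2)[OF mem] by (simp add: SL_mats_def)
  have inj: "fg_reduced u1 \<Longrightarrow> fg_reduced u2 \<Longrightarrow>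
      \<phi> (u1, v1) = \<phi> (u2, v2) \<Longrightarrow> u1 = u2 \<and> v1 = v2" for u1 v1 u2 v2
    using E(1) mem unfolding inj_on_def by blast
  define pa where "pa = pos [a]"
  define pb where "pb = pos [b]"
  have r: "fg_reduced []" "fg_reduced pa" "fg_reduced pb"
    by (simp_all add: pa_def pb_def pos_reduced)
  have m2: "fg_mult [] pa = pa" "fg_mult pa [] = pa" "fg_mult [] pb = pb" "fg_mult pb [] = pb"
    "fg_mult ([]::(bool \<times> sig2) list) [] = []"
    using r by (simp_all add: fg_mult_Nil_l fg_mult_Nil_r fg_mult_Nil)
  define A where "A = \<phi> (pa, [])"
  define B where "B = \<phi> (pb, [])"
  define X where "X = \<phi> ([], [c])"
  define EE where "EE = \<phi> ([], [])"
  have XA: "X ** A = A ** X" using hom[OF r(1) r(2), of "[c]" "[]"] hom[OF r(2) r(1), of "[]" "[c]"]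
    unfolding X_def A_def m2 by simp
  have XB: "X ** B = B ** X" using hom[OF r(1) r(3), of "[c]" "[]"] hom[OF r(3) r(1), of "[]" "[c]"]
    unfolding X_def B_def m2 by simp
  have AB: "A ** B \<noteq> B ** A"
  proof
    assume "A ** B = B ** A"
    then have "\<phi> (pos [a, b], []) = \<phi> (pos [b, a], [])"
      using hom[OF r(2) r(3), of "[]" "[]"] hom[OF r(3) r(2), of "[]" "[]"] unfolding A_def B_def
      by (simp add: pa_def pb_def fg_mult_pos)
    then have "pos [a, b] = pos [b, a]" using inj[OF pos_reduced pos_reduced] by blast
    then show False by (simp add: pos_def)
  qed
  obtain l where l: "X = mat l" using cent2[OF XA XB AB] by blast
  have l2: "l * l = 1" using dt[OF r(1), of "[c]"] l det2_mat unfolding X_def by metis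
  have XE: "X ** EE = X" using hom[OF r(1) r(1), of "[c]" "[]"] unfolding X_def EE_def m2 by simp
  have EI: "EE = mat 1"
  proof -
    have "l * EE$i$j = l * (if i = j then 1 else 0)" for i j
    proof -
      have "(X ** EE)$i$j = X$i$j" using XE by simp
      then show ?thesis unfolding l mm2 mat2_nth
        using exhaust_2[of i] by (auto simp: mat2_nth)
    qed
    moreover have "l \<noteq> 0" using l2 by auto
    ultimately show ?thesis by (simp add: vec_eq_iff mat2_nth)
  qed
  have "\<phi> ([], [c, c]) = X ** X" using hom[OF r(1) r(1), of "[c]" "[c]"] unfolding X_def m2 by simp
  also have "\<dots> = mat 1" using l l2 mat2_mult by simp
  finally have "\<phi> ([], [c, c]) = \<phi> ([], [])" using EI EE_def by simp
  then show False using inj[OF r(1) r(1)] by blast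
qed


(* ---- from Q.thy ---- *)


lemma abs3_mult: "abs3 M * abs3 N = abs3 (M ** N)" by (simp add: times_m3_def abs3_inverse)
lemma abs3_inj: "abs3 M = abs3 N \<Longrightarrow> M = N" by (simp add: abs3_inject)
lemma ent_abs3: "ent (abs3 M) i j = M $ i $ j" by (simp add: ent_def abs3_inverse)
lemma det3_abs3: "det3 (abs3 M) = det M" by (simp add: det3_def abs3_inverse)
lemma one_abs3: "abs3 (mat 1) = 1" by (simp add: one_m3_def)

lemma idem_det_nz:
  assumes "e * e = e" "det3 e \<noteq> 0" shows "e = 1"
proof -
  have "invertible (rep3 e)" using assms(2) invertible_det_nz unfolding det3_def by blast
  then obtain Ei where Ei: "Ei ** rep3 e = mat 1" using invertible_left_inverse by blast
  have "rep3 e = (Ei ** rep3 e) ** rep3 e" using Ei by simp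
  also have "\<dots> = Ei ** rep3 (e * e)" by (simp add: matrix_mul_assoc rep3_mult)
  also have "\<dots> = mat 1" using assms(1) Ei by simp
  finally show ?thesis by (metis rep3_inverse one_abs3)
qed

lemma finite_entsF: "finite ((\<lambda>(i,j). ent X i j) ` (UNIV :: (3 \<times> 3) set))"
  by simp

lemma part4:
  assumes d: "d > 0"
  shows "\<not> (\<exists>\<phi> :: sig2 list \<times> sig2 list \<Rightarrow> complex^3^3.
        is_embedding (sg_carrier \<times> sg_carrier) (prod_mult sg_mult sg_mult) (SL_mats d) (**) \<phi>)"
proof
  assume "\<exists>\<phi> :: sig2 list \<times> sig2 list \<Rightarrow> complex^3^3.
        is_embedding (sg_carrier \<times> sg_carrier) (prod_mult sg_mult sg_mult) (SL_mats d) (**) \<phi>"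
  then obtain \<phi> :: "sig2 list \<times> sig2 list \<Rightarrow> complex^3^3" where
    emb: "is_embedding (sg_carrier \<times> sg_carrier) (prod_mult sg_mult sg_mult) (SL_mats d) (**) \<phi>" by blast
  note E = emb_unfold[OF emb]
  have mem: "(u, v) \<in> sg_carrier \<times> sg_carrier" for u v by (simp add: sg_carrier_def)
  have hom: "\<phi> (u1 @ u2, v1 @ v2) = \<phi> (u1, v1) ** \<phi> (u2, v2)" for u1 v1 u2 v2
    using E(3)[OF mem mem] by (simp add: pm sg_mult_def)
  have ent: "\<phi> (u, v) $ i $ j \<in> O_d d" and dt: "det (\<phi> (u, v)) = 1" for u v i j
    using E(2)[OF mem] by (simp_all add: SL_mats_def int_mats_def)
  have inj: "\<phi> (u1, v1) = \<phi> (u2, v2) \<Longrightarrow> u1 = u2 \<and> v1 = v2" for u1 v1 u2 v2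
    using E(1) mem unfolding inj_on_def by blast
  define f where "f u = abs3 (\<phi> (u, []))" for u
  define g where "g v = abs3 (\<phi> ([], v))" for v
  have fhom: "f (u @ v) = f u * f v" for u v unfolding f_def abs3_mult using hom[of u v "[]" "[]"] by simp
  have e1: "abs3 (\<phi> ([], [])) = 1"
  proof (rule idem_det_nz)
    show "abs3 (\<phi> ([], [])) * abs3 (\<phi> ([], [])) = abs3 (\<phi> ([], []))" unfolding abs3_mult using hom[of "[]" "[]" "[]" "[]"] by simp
    show "det3 (abs3 (\<phi> ([], []))) \<noteq> 0" using dt by (simp add: det3_abs3)
  qed
  have f0: "f [] = 1" using e1 unfolding f_def .
  have finj: "inj f" unfolding inj_def f_def using inj abs3_inj by blast
  have comm: "f u * g v = g v * f u" for u v
    unfolding f_def g_def abs3_mult using hom[of u "[]" "[]" v] hom[of "[]" u v "[]"] by simp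
  have CD: "g [a] * g [b] \<noteq> g [b] * g [a]"
  proof
    assume "g [a] * g [b] = g [b] * g [a]"
    then have "\<phi> ([], [a, b]) = \<phi> ([], [b, a])" unfolding g_def abs3_mult using hom[of "[]" "[]" "[a]" "[b]"] hom[of "[]" "[]" "[b]" "[a]"]
      by (simp add: abs3_inject)
    then show False using inj by blast
  qed
  have per: "(\<exists>k>0. (f u)^k = 1) \<or> (\<exists>l N. f u = sc l + N \<and> N * N = 0 \<and> tr3 N = 0 \<and> cmod l = 1)" if "u \<noteq> []" for u
  proof (rule per_elem[OF d])
    let ?F = "(\<lambda>(i,j). ent (f u) i j) ` (UNIV :: (3 \<times> 3) set)"
    show "finite ?F" by simp
    show "?F \<subseteq> O_d d" using ent by (auto simp: f_def ent_abs3)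
    show "ent (f u) i j \<in> Rg ?F" for i j by (rule Rg_F) auto
    show "1 \<in> Rg ?F" by (rule Rg_1)
    show "det3 (f u) * 1 = 1" using dt by (simp add: f_def det3_abs3)
  qed (use comm CD in auto)
  show False by (rule final3[OF fhom f0 finj per])
qed

lemma sing_case:
  assumes ee: "e * e = e" and e1: "e \<noteq> 1" and Xe: "X * e = X" and XX': "X * X' = e"
    and XC: "X * C = C * X" and XD: "X * D = D * X" and CD: "C * D \<noteq> D * C"
  shows "\<exists>s. X = sc s * e"
proof -
  have de: "det3 e = 0" using idem_det_nz[OF ee] e1 by blast
  have dX: "det (rep3 X) = 0" using det3_mult[of X e] Xe de unfolding det3_def by simp
  have "\<not> invertible (rep3 X)" using dX invertible_det_nz by blast
  then have "\<not> (\<exists>B. B ** rep3 X = mat 1)" using invertible_left_inverse by blast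
  then obtain k where k: "rep3 X *v k = 0" "k \<noteq> 0" using matrix_left_invertible_ker by blast
  obtain s t where st: "X * X = sc s * X + sc t" using derog_m3[OF XC XD CD] by blast
  have v: "(rep3 (sc s * X + sc t) *v k) $ i = s * (rep3 X *v k) $ i + t * k $ i" for i
    using exhaust_3[of i] by (auto simp: mv3 ent_def[symmetric] ent_add ent_scmult ent_sc algebra_simps)
  have "rep3 (X * X) *v k = 0" by (simp add: rep3_mult matrix_vector_mul_assoc[symmetric] k(1))
  then have "t * k $ i = 0" for i using v[of i] k(1) st by (simp add: vec_eq_iff)
  moreover obtain i where "k $ i \<noteq> 0" using k(2) by (auto simp: vec_eq_iff)
  ultimately have t0: "t = 0" by auto
  have "X = X * (X * X')" using Xe XX' by simp
  also have "\<dots> = (X * X) * X'" by (simp add: mult.assoc)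
  also have "\<dots> = sc s * (X * X')" using st t0 by (simp add: sc_zero mult.assoc)
  finally show ?thesis using XX' by blast
qed

lemma part5:
  assumes d: "d > 0"
  shows "\<not> (\<exists>\<phi> :: (bool \<times> sig2) list \<times> sig2 list \<Rightarrow> complex^3^3.
        is_embedding (fg_carrier \<times> sg_carrier) (prod_mult fg_mult sg_mult) (int_mats d) (**) \<phi>)"
proof
  assume "\<exists>\<phi> :: (bool \<times> sig2) list \<times> sig2 list \<Rightarrow> complex^3^3.
        is_embedding (fg_carrier \<times> sg_carrier) (prod_mult fg_mult sg_mult) (int_mats d) (**) \<phi>"
  then obtain \<phi> :: "(bool \<times> sig2) list \<times> sig2 list \<Rightarrow> complex^3^3" where
    emb: "is_embedding (fg_carrier \<times> sg_carrier) (prod_mult fg_mult sg_mult) (int_mats d) (**) \<phi>" by blast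
  note E = emb_unfold[OF emb]
  have mem: "fg_reduced u \<Longrightarrow> (u, v) \<in> fg_carrier \<times> sg_carrier" for u v by (simp add: fg_carrier_def sg_carrier_def)
  have hom: "fg_reduced u1 \<Longrightarrow> fg_reduced u2 \<Longrightarrow>
      \<phi> (fg_mult u1 u2, v1 @ v2) = \<phi> (u1, v1) ** \<phi> (u2, v2)" for u1 v1 u2 v2
    using E(3)[OF mem mem] by (simp add: pm sg_mult_def)
  have ent: "fg_reduced u \<Longrightarrow> \<phi> (u, v) $ i $ j \<in> O_d d" for u v i j
    using E(2)[OF mem] by (simp add: int_mats_def)
  have inj: "fg_reduced u1 \<Longrightarrow> fg_reduced u2 \<Longrightarrow>
      \<phi> (u1, v1) = \<phi> (u2, v2) \<Longrightarrow> u1 = u2 \<and> v1 = v2" for u1 v1 u2 v2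
    using E(1) mem unfolding inj_on_def by blast
  have r0: "fg_reduced ([] :: (bool \<times> sig2) list)" by simp
  define f where "f u = abs3 (\<phi> (pos u, []))" for u
  define f' where "f' u = abs3 (\<phi> (negw u, []))" for u
  define g where "g v = abs3 (\<phi> ([], v))" for v
  define e where "e = abs3 (\<phi> ([], []))"
  have fhom: "f (u @ v) = f u * f v" for u v
    unfolding f_def abs3_mult using hom[OF pos_reduced pos_reduced, of u v "[]" "[]"] by (simp add: fg_mult_pos)
  have f0: "f [] = e" unfolding f_def e_def by (simp add: pos_def)
  have finv: "f u * f' u = e" for u
    unfolding f_def f'_def e_def abs3_mult using hom[OF pos_reduced negw_reduced, of u u "[]" "[]"]
    by (simp add: fg_mult_pos_negw)
  have fe: "f u * e = f u" for u
    unfolding f_def e_def abs3_mult using hom[OF pos_reduced r0, of u "[]" "[]"] by (simp add: fg_mult_Nil_r pos_reduced)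
  have ee: "e * e = e" unfolding e_def abs3_mult using hom[OF r0 r0, of "[]" "[]"] by (simp add: fg_mult_Nil)
  have finj: "inj f" unfolding inj_def f_def using inj[OF pos_reduced pos_reduced] abs3_inj pos_inj by blast
  have comm: "f u * g v = g v * f u" for u v
    unfolding f_def g_def abs3_mult using hom[OF pos_reduced[of u] r0, of "[]" v] hom[OF r0 pos_reduced[of u], of v "[]"]
    by (simp add: fg_mult_Nil_l fg_mult_Nil_r pos_reduced)
  have CD: "g [a] * g [b] \<noteq> g [b] * g [a]"
  proof
    assume "g [a] * g [b] = g [b] * g [a]"
    then have "\<phi> ([], [a, b]) = \<phi> ([], [b, a])" unfolding g_def abs3_mult
      using hom[OF r0 r0, of "[a]" "[b]"] hom[OF r0 r0, of "[b]" "[a]"]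
      by (simp add: abs3_inject fg_mult_Nil)
    then show False using inj[OF r0 r0] by blast
  qed
  have ABn: "f [a] * f [b] \<noteq> f [b] * f [a]"
  proof
    assume "f [a] * f [b] = f [b] * f [a]"
    then have "f [a, b] = f [b, a]" using fhom[of "[a]" "[b]"] fhom[of "[b]" "[a]"] by simp
    then show False using finj by (simp add: inj_eq)
  qed
  show False
  proof (cases "e = 1")
    case True
    have per: "(\<exists>k>0. (f u)^k = 1) \<or> (\<exists>l N. f u = sc l + N \<and> N * N = 0 \<and> tr3 N = 0 \<and> cmod l = 1)" if "u \<noteq> []" for u
    proof (rule per_elem[OF d])
      let ?F = "(\<lambda>(i,j). ent (f u) i j) ` (UNIV :: (3 \<times> 3) set) \<union> (\<lambda>(i,j). ent (f' u) i j) ` (UNIV :: (3 \<times> 3) set)"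
      show "finite ?F" by simp
      show "?F \<subseteq> O_d d" using ent[OF pos_reduced] ent[OF negw_reduced] by (auto simp: f_def f'_def ent_abs3)
      show "ent (f u) i j \<in> Rg ?F" for i j by (rule Rg_F) auto
      have "ent (f' u) i j \<in> Rg ?F" for i j by (rule Rg_F) auto
      then show "det3 (f' u) \<in> Rg ?F" by (rule Rg_det3)
      show "det3 (f u) * det3 (f' u) = 1" using finv[of u] True by (simp add: det3_mult[symmetric] det3_one)
    qed (use comm CD in auto)
    show False by (rule final3[OF fhom _ finj per]) (use f0 True in simp)
  next
    case False
    obtain sa where sa: "f [a] = sc sa * e" using sing_case[OF ee False fe finv comm comm CD] by blast
    obtain sb where sb: "f [b] = sc sb * e" using sing_case[OF ee False fe finv comm comm CD] by blast
    have "f [a] * f [b] = sc (sa * sb) * (e * e)" unfolding sa sb by (metis mult.assoc sc_comm sc_mult)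
    also have "\<dots> = f [b] * f [a]" unfolding sa sb by (metis mult.assoc sc_comm sc_mult mult.commute)
    finally show False using ABn by simp
  qed
qed


theorem proposition6:
  fixes d :: nat
  assumes "d \<in> {1, 2, 3, 7, 11}"
  shows
   "(\<not> (\<exists>\<phi> :: sig2 list \<times> (bool \<times> sig1) list \<Rightarrow> complex^2^2.
        is_embedding (sg_carrier \<times> fg_carrier) (prod_mult sg_mult fg_mult)
                     (int_mats d) (**) \<phi>))
  \<and> (\<not> (\<exists>\<phi> :: (bool \<times> sig2) list \<times> (bool \<times> sig1) list \<Rightarrow> complex^2^2.
        is_embedding (fg_carrier \<times> fg_carrier) (prod_mult fg_mult fg_mult)
                     (int_mats d) (**) \<phi>))
  \<and> (\<not> (\<exists>\<phi> :: (bool \<times> sig2) list \<times> sig1 list \<Rightarrow> complex^2^2.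
        is_embedding (fg_carrier \<times> sg_carrier) (prod_mult fg_mult sg_mult)
                     (SL_mats d) (**) \<phi>))
  \<and> (\<not> (\<exists>\<phi> :: sig2 list \<times> sig2 list \<Rightarrow> complex^3^3.
        is_embedding (sg_carrier \<times> sg_carrier) (prod_mult sg_mult sg_mult)
                     (SL_mats d) (**) \<phi>))
  \<and> (\<not> (\<exists>\<phi> :: (bool \<times> sig2) list \<times> sig2 list \<Rightarrow> complex^3^3.
        is_embedding (fg_carrier \<times> sg_carrier) (prod_mult fg_mult sg_mult)
                     (int_mats d) (**) \<phi>))"
  proof -
  have d: "d > 0" using assms by auto
  show ?thesis using part1[OF d] part2[OF d] part3 part4[OF d] part5[OF d] by blast
qed

end
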